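(* Let $n\ge2$ and $\alpha\in\mathbb{C}$ with $\operatorname{Re}\alpha>(1-n)/2$. Then, with implicit constants depending only on $n,\alpha$, for all $\lambda\in\mathbb{R}$: (i) for all $t>0$, $|m^\alpha_t(\lambda)|\lesssim (1+t)\,e^{-\frac{n-1}{2}t}$; (ii) for all $0<t\le1$, $\big|\frac{\mathrm{d}}{\mathrm{d}\lambda}m^\alpha_t(\lambda)\big|\lesssim t$, and if in addition $|\lambda| t\ge1$, then $|m^\alpha_t(\lambda)|\lesssim (|\lambda| t)^{-(\operatorname{Re}\alpha+\frac{n-1}{2})}$.
   Context: For $t>0$, $\lambda\in\mathbb{R}$ and $\operatorname{Re}\alpha>(1-n)/2$, $$m^\alpha_t(\lambda)=2^{\frac{n-2}{2}+\alpha}\,\Gamma\!\left(\tfrac n2\right)\frac{e^{\alpha t}}{(e^t-1)^{2\alpha}}(\sinh t)^{\frac{2-n}{2}+1+\alpha}\,P^{\frac{2-n}{2}-\alpha}_{-\frac12+i\lambda}(\cosh t),$$ where $P^\mu_\nu$ is the associated Legendre function of the first kind on $(1,\infty)$; equivalently, with a constant $C_\alpha$, $P^{\frac{2-n}{2}-\alpha}_{-\frac12+i\lambda}(\cosh t)=C_\alpha(\sinh t)^{\frac{2-n}{2}-\alpha}\int_0^t(\cosh t-\cosh s)^{\alpha+\frac{n-3}{2}}\cos(\lambda s)\,\mathrm{d}s$. For $\alpha=0$, $m^0_t(\lambda)=\varphi_\lambda(t)$ is the elementary spherical function of $\mathbb{H}^n$. *)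

theory Defs
  imports "HOL-Analysis.Analysis"
begin

text \<open>Associated Legendre function of the first kind on (1,infinity), evaluated at cosh t,
  with degree -1/2 + i*lam and order mu, via the Mehler-Dirichlet type integral
  (valid for Re mu < 1/2):
  P^mu_{-1/2+i lam}(cosh t) = sqrt(2/pi) / Gamma(1/2 - mu) * (sinh t)^mu *
     int_0^t (cosh t - cosh s)^(-mu - 1/2) cos(lam s) ds.\<close>
definition legendreP_cosh :: "complex \<Rightarrow> real \<Rightarrow> real \<Rightarrow> complex" where
  "legendreP_cosh \<mu> lam t =
     complex_of_real (sqrt (2 / pi)) / Gamma (1/2 - \<mu>)
     * (complex_of_real (sinh t)) powr \<mu>
     * integral {0..t} (\<lambda>s. (complex_of_real (cosh t - cosh s)) powr (- \<mu> - 1/2)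
                              * complex_of_real (cos (lam * s)))"

definition mult_m :: "nat \<Rightarrow> complex \<Rightarrow> real \<Rightarrow> real \<Rightarrow> complex" where
  "mult_m n \<alpha> t lam =
     2 powr ((of_nat n - 2) / 2 + \<alpha>) * Gamma (of_nat n / 2)
     * exp (\<alpha> * of_real t) / (complex_of_real (exp t - 1)) powr (2 * \<alpha>)
     * (complex_of_real (sinh t)) powr ((2 - of_nat n) / 2 + \<alpha>)
     * legendreP_cosh ((2 - of_nat n) / 2 - \<alpha>) lam t"

end

theory Submission
  imports Defs "HOL-Complex_Analysis.Complex_Analysis"
begin


lemma incr_from_deriv:
  fixes f f' :: "real \<Rightarrow> real"
  assumes "a \<le> b" "\<And>x. a \<le> x \<Longrightarrow> x \<le> b \<Longrightarrow> (f has_real_derivative f' x) (at x)"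
    "\<And>x. a \<le> x \<Longrightarrow> x \<le> b \<Longrightarrow> f' x \<ge> 0"
  shows "f a \<le> f b"
proof (rule DERIV_nonneg_imp_increasing_open[OF assms(1)])
  show "\<And>x. a < x \<Longrightarrow> x < b \<Longrightarrow> \<exists>y. (f has_real_derivative y) (at x) \<and> 0 \<le> y"
    using assms by (meson less_imp_le)
  show "continuous_on {a..b} f"
    using assms(2) by (meson DERIV_isCont atLeastAtMost_iff continuous_at_imp_continuous_on)
qed

lemma cos1_ge: "cos (1::real) \<ge> 1/2"
proof -
  have "cos (pi/3) \<le> cos 1" using pi_gt3 by (intro cos_monotone_0_pi_le) auto
  thus ?thesis by (simp add: cos_60)
qed

lemma sin_ge_half: assumes "0 \<le> (y::real)" "y \<le> 1" shows "y/2 \<le> sin y"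
proof -
  have "(\<lambda>x. sin x - x/2) 0 \<le> (\<lambda>x. sin x - x/2) y"
  proof (rule incr_from_deriv[where f="\<lambda>x. sin x - x/2" and f'="\<lambda>x. cos x - 1/2"])
    fix x assume "0 \<le> x" "x \<le> y"
    show "((\<lambda>x. sin x - x/2) has_real_derivative cos x - 1/2) (at x)"
      by (auto intro!: derivative_eq_intros DERIV_cdivide)
    have "cos 1 \<le> cos x" using \<open>0 \<le> x\<close> \<open>x \<le> y\<close> assms pi_gt3 by (intro cos_monotone_0_pi_le) auto
    thus "cos x - 1/2 \<ge> 0" using cos1_ge by linarith
  qed (use assms in auto)
  thus ?thesis by simp
qed

lemma one_minus_cos_le: assumes "0 \<le> (y::real)" shows "1 - cos y \<le> y^2/2"
proof -
  have "(\<lambda>x. x^2/2 - 1 + cos x) 0 \<le> (\<lambda>x. x^2/2 - 1 + cos x) y"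
  proof (rule incr_from_deriv[where f="\<lambda>x. x^2/2 - 1 + cos x" and f'="\<lambda>x. x - sin x"])
    fix x assume "0 \<le> x" "x \<le> y"
    show "((\<lambda>x. x^2/2 - 1 + cos x) has_real_derivative x - sin x) (at x)"
      by (auto intro!: derivative_eq_intros DERIV_cdivide)
    show "x - sin x \<ge> 0" using sin_x_le_x \<open>0 \<le> x\<close> by auto
  qed (use assms in auto)
  thus ?thesis by simp
qed

lemma one_minus_cos_ge: assumes "0 \<le> (y::real)" "y \<le> 1" shows "y^2/4 \<le> 1 - cos y"
proof -
  have "(\<lambda>x. 1 - cos x - x^2/4) 0 \<le> (\<lambda>x. 1 - cos x - x^2/4) y"
  proof (rule incr_from_deriv[where f="\<lambda>x. 1 - cos x - x^2/4" and f'="\<lambda>x. sin x - x/2"])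
    fix x assume "0 \<le> x" "x \<le> y"
    show "((\<lambda>x. 1 - cos x - x^2/4) has_real_derivative sin x - x/2) (at x)"
      by (auto intro!: derivative_eq_intros DERIV_cdivide)
    show "sin x - x/2 \<ge> 0" using sin_ge_half[of x] \<open>0 \<le> x\<close> \<open>x \<le> y\<close> assms by auto
  qed (use assms in auto)
  thus ?thesis by simp
qed

lemma sinh_ge: assumes "0 \<le> (x::real)" shows "x \<le> sinh x"
proof -
  have "(\<lambda>x. sinh x - x) 0 \<le> (\<lambda>x. sinh x - x) x"
  proof (rule incr_from_deriv[where f="\<lambda>x. sinh x - x" and f'="\<lambda>x. cosh x - 1"])
    fix y show "((\<lambda>x. sinh x - x) has_real_derivative cosh y - 1) (at y)"
      by (auto intro!: derivative_eq_intros DERIV_cdivide)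
    show "cosh y - 1 \<ge> 0" using cosh_real_ge_1[of y] by simp
  qed (use assms in auto)
  thus ?thesis by simp
qed

lemma cosh_le2: assumes "\<bar>x::real\<bar> \<le> 1" shows "cosh x \<le> 2"
proof -
  have "cosh x = cosh \<bar>x\<bar>" by (simp add: abs_if)
  also have "\<dots> \<le> cosh 1" using assms by (subst cosh_real_nonneg_le_iff) auto
  also have "cosh (1::real) = (exp 1 + exp (-1))/2" by (simp add: cosh_def)
  also have "\<dots> \<le> 2" using exp_le exp_le_one_iff[of "-1::real"] by (simp add: exp_minus)
  finally show ?thesis .
qed

lemma sinh_le2: assumes "0 \<le> (x::real)" "x \<le> 1" shows "sinh x \<le> 2 * x"
proof -
  have "(\<lambda>x. sinh x - 2*x) 0 \<ge> (\<lambda>x. sinh x - 2*x) x"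
  proof -
    have "(\<lambda>x. 2*x - sinh x) 0 \<le> (\<lambda>x. 2*x - sinh x) x"
    proof (rule incr_from_deriv[where f="\<lambda>x. 2*x - sinh x" and f'="\<lambda>x. 2 - cosh x"])
      fix y assume "0 \<le> y" "y \<le> x"
      show "((\<lambda>x. 2*x - sinh x) has_real_derivative 2 - cosh y) (at y)"
        by (auto intro!: derivative_eq_intros DERIV_cdivide)
      show "2 - cosh y \<ge> 0" using cosh_le2[of y] \<open>0 \<le> y\<close> \<open>y \<le> x\<close> assms by auto
    qed (use assms in auto)
    thus ?thesis by simp
  qed
  thus ?thesis by simp
qed


lemma cosh_diff_lower: assumes "0 < t" "t/2 \<le> s" "s \<le> (t::real)"
  shows "(t/2) * (t - s) \<le> cosh t - cosh s"
proof -
  have "(\<lambda>x. cosh x - (t/2)*x) s \<le> (\<lambda>x. cosh x - (t/2)*x) t"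
  proof (rule incr_from_deriv[where f="\<lambda>x. cosh x - (t/2)*x" and f'="\<lambda>x. sinh x - t/2"])
    fix x assume "s \<le> x" "x \<le> t"
    show "((\<lambda>x. cosh x - (t/2)*x) has_real_derivative sinh x - t/2) (at x)"
      by (auto intro!: derivative_eq_intros)
    show "sinh x - t/2 \<ge> 0" using sinh_ge[of x] \<open>s \<le> x\<close> assms by auto
  qed (use assms in auto)
  thus ?thesis by (simp add: field_simps)
qed

lemma cosh_diff_upper: assumes "0 \<le> s" "s \<le> t" "t \<le> (1::real)"
  shows "cosh t - cosh s \<le> 2 * t * (t - s)"
proof -
  have "(\<lambda>x. 2*t*x - cosh x) s \<le> (\<lambda>x. 2*t*x - cosh x) t"
  proof (rule incr_from_deriv[where f="\<lambda>x. 2*t*x - cosh x" and f'="\<lambda>x. 2*t - sinh x"])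
    fix x assume "s \<le> x" "x \<le> t"
    show "((\<lambda>x. 2*t*x - cosh x) has_real_derivative 2*t - sinh x) (at x)"
      by (auto intro!: derivative_eq_intros)
    show "2*t - sinh x \<ge> 0" using sinh_le2[of x] \<open>s \<le> x\<close> \<open>x \<le> t\<close> assms by auto
  qed (use assms in auto)
  thus ?thesis by (simp add: algebra_simps)
qed

lemma cosh_convex_bound: assumes "0 < t" "0 \<le> s" "s \<le> (t::real)"
  shows "cosh s \<le> (s/t) * cosh t + (1 - s/t)"
proof -
  define th where "th = s/t"
  have th: "0 \<le> th" "th \<le> 1" using assms by (auto simp: th_def)
  have s: "s = (1 - th) * 0 + th * t" using assms by (simp add: th_def)
  have s': "-s = (1 - th) * 0 + th * (-t)" using assms by (simp add: th_def)
  have "exp s \<le> (1 - th) * exp 0 + th * exp t"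
    using convex_onD[OF exp_convex th, of 0 t] s by simp
  moreover have "exp (-s) \<le> (1 - th) * exp 0 + th * exp (-t)"
    using convex_onD[OF exp_convex th, of 0 "-t"] s' by simp
  ultimately have "exp s + exp (-s) \<le> 2*(1 - th) + th * (exp t + exp (-t))"
    by (simp add: algebra_simps)
  thus ?thesis unfolding th_def[symmetric] by (simp add: cosh_def field_simps)
qed

lemma cosh_diff_conv: assumes "0 < t" "0 \<le> s" "s \<le> (t::real)"
  shows "((t - s)/t) * (cosh t - 1) \<le> cosh t - cosh s"
proof -
  have "t * cosh s \<le> t * ((s/t) * cosh t + (1 - s/t))"
    using cosh_convex_bound[OF assms] assms by (intro mult_left_mono) auto
  also have "\<dots> = s * cosh t + (t - s)" using assms by (simp add: field_simps)
  finally have "t * cosh s \<le> s * cosh t + (t - s)" .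
  hence "(t - s) * (cosh t - 1) \<le> t * (cosh t - cosh s)" by (simp add: algebra_simps)
  thus ?thesis using assms by (simp add: divide_le_eq mult.commute)
qed

lemma powr_two_sided:
  fixes d u M b :: real
  assumes "0 < u" "1 \<le> M" "u / M \<le> d" "d \<le> M * u"
  shows "d powr b \<le> M powr \<bar>b\<bar> * u powr b"
proof (cases "b \<ge> 0")
  case True
  have "0 < d" using assms by (smt (verit) divide_pos_pos)
  have "d powr b \<le> (M*u) powr b" using assms True
    using \<open>0 < d\<close> by (intro powr_mono2) auto
  also have "\<dots> = M powr \<bar>b\<bar> * u powr b" using True assms by (simp add: powr_mult)
  finally show ?thesis .
next
  case False
  have "0 < u / M" using assms by auto
  hence "d powr b \<le> (u/M) powr b" using assms False by (intro powr_mono2') auto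
  also have "\<dots> = M powr \<bar>b\<bar> * u powr b" using False assms
    by (simp add: powr_divide powr_minus divide_simps)
  finally show ?thesis .
qed

lemma has_integral_powr_rev:
  assumes "c > (-1::real)" "a \<le> t"
  shows "((\<lambda>s. (t - s) powr c) has_integral ((t - a) powr (c+1)/(c+1))) {a..t}"
proof -
  have "((\<lambda>x. x powr c) has_integral ((t - a) powr (c+1)/(c+1))) {0..t-a}"
    using has_integral_powr_from_0[of c "t-a"] assms by auto
  hence "((\<lambda>x. (-x) powr c) has_integral ((t - a) powr (c+1)/(c+1))) {a-t..0}"
    using has_integral_reflect_real[of "\<lambda>x. x powr c" _ "t-a" 0] by simp
  hence "((\<lambda>x. (-(1 *\<^sub>R x + (-t))) powr c) has_integral
          ((t - a) powr (c+1)/(c+1)) /\<^sub>R 1 ^ DIM(real))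
           (cbox ((a-t - (-t)) /\<^sub>R 1) ((0 - (-t)) /\<^sub>R 1))"
    by (subst has_integral_affinity_iff) (auto simp: cbox_interval)
  thus ?thesis by (simp add: cbox_interval)
qed

lemma Re_cosh_complex: "Re (cosh z) = cosh (Re z) * cos (Im z)"
proof -
  have "Re (exp (-z)) = exp (-Re z) * cos (Im z)" by (simp only: Re_exp) simp
  moreover have "Re (exp z) = exp (Re z) * cos (Im z)" by (simp only: Re_exp)
  ultimately show ?thesis unfolding cosh_def by (simp add: algebra_simps)
qed

lemma Im_cosh_complex: "Im (cosh z) = sinh (Re z) * sin (Im z)"
proof -
  have "Im (exp (-z)) = - (exp (-Re z) * sin (Im z))" by (simp only: Im_exp) simp
  moreover have "Im (exp z) = exp (Re z) * sin (Im z)" by (simp only: Im_exp)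
  ultimately show ?thesis unfolding cosh_def sinh_def by (simp add: algebra_simps)
qed

lemma cosh_of_real_complex: "cosh (complex_of_real x) = complex_of_real (cosh x)"
  by (simp add: cosh_def complex_eq_iff Re_exp Im_exp exp_minus)


definition fb :: "complex \<Rightarrow> real \<Rightarrow> real \<Rightarrow> complex" where
  "fb \<beta> t s = complex_of_real (cosh t - cosh s) powr \<beta>"

lemma cosh_le_mono: "0 \<le> s \<Longrightarrow> s \<le> t \<Longrightarrow> cosh s \<le> cosh (t::real)"
  by (subst cosh_real_nonneg_le_iff) auto

lemma cosh_less_mono: assumes "0 \<le> s" "s < t" shows "cosh s < cosh (t::real)"
proof -
  have "\<not> cosh t \<le> cosh s" using cosh_real_nonneg_le_iff[of t s] assms by auto
  thus ?thesis by simp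
qed

lemma norm_fb: "0 \<le> s \<Longrightarrow> s \<le> t \<Longrightarrow> norm (fb \<beta> t s) = (cosh t - cosh s) powr Re \<beta>"
  unfolding fb_def using cosh_le_mono[of s t] by (subst norm_powr_real_powr) auto

lemma fb_dom:
  assumes "0 < t" "0 \<le> s" "s \<le> t"
  shows "norm (fb \<beta> t s) \<le> (cosh t - 1) powr Re \<beta> * ((t - s)/t) powr min (Re \<beta>) 0"
proof (cases "s = t")
  case True
  thus ?thesis by (simp add: fb_def)
next
  case False
  hence st: "s < t" using assms by auto
  have lo: "((t - s)/t) * (cosh t - 1) \<le> cosh t - cosh s" using cosh_diff_conv assms by auto
  have pos: "0 < ((t - s)/t) * (cosh t - 1)"
    using st assms cosh_less_mono[of 0 t] by (auto intro!: mult_pos_pos)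
  have hi: "cosh t - cosh s \<le> cosh t - 1" using cosh_real_ge_1[of s] by simp
  show ?thesis
  proof (cases "Re \<beta> \<ge> 0")
    case True
    have "norm (fb \<beta> t s) = (cosh t - cosh s) powr Re \<beta>" using norm_fb assms by auto
    also have "\<dots> \<le> (cosh t - 1) powr Re \<beta>" using True hi lo pos by (intro powr_mono2) auto
    also have "\<dots> = (cosh t - 1) powr Re \<beta> * ((t - s)/t) powr min (Re \<beta>) 0"
      using True st by simp
    finally show ?thesis .
  next
    case False
    have "norm (fb \<beta> t s) = (cosh t - cosh s) powr Re \<beta>" using norm_fb assms by auto
    also have "\<dots> \<le> (((t - s)/t) * (cosh t - 1)) powr Re \<beta>" using False lo pos
      by (intro powr_mono2') auto
    also have "\<dots> = ((t - s)/t) powr Re \<beta> * (cosh t - 1) powr Re \<beta>" by (rule powr_mult)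
    also have "\<dots> = (cosh t - 1) powr Re \<beta> * ((t - s)/t) powr min (Re \<beta>) 0"
      using False by (simp add: min_def)
    finally show ?thesis .
  qed
qed

lemma fb_cont: "continuous_on {0..<t} (fb \<beta> t)"
  unfolding fb_def
proof (intro continuous_intros)
  show "{0..<t} \<subseteq> {z. 0 \<le> Re (complex_of_real (cosh t - cosh z)) \<or> Im (complex_of_real (cosh t - cosh z)) \<noteq> 0}"
    using cosh_less_mono by force
  show "\<And>z. z \<in> {0..<t} \<Longrightarrow> complex_of_real (cosh t - cosh z) = 0 \<Longrightarrow> 0 < Re \<beta>"
    using cosh_less_mono by force
qed

lemma fb_int:
  assumes t: "0 < t" and b: "Re \<beta> > -1" and g: "continuous_on {0..t} g"
    and gB: "\<And>s. s \<in> {0..t} \<Longrightarrow> norm (g s) \<le> B"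
  shows "(\<lambda>s. fb \<beta> t s * g s) integrable_on {0..t}"
    and "norm (integral {0..t} (\<lambda>s. fb \<beta> t s * g s))
           \<le> B * ((cosh t - 1) powr Re \<beta> * t / (min (Re \<beta>) 0 + 1))"
proof -
  define b' where "b' = min (Re \<beta>) 0"
  have b': "b' > -1" "b' \<le> 0" using b by (auto simp: b'_def)
  define K where "K = (cosh t - 1) powr Re \<beta>"
  define d where "d = (\<lambda>s. B * (K * ((t - s) powr b' * t powr (-b'))))"
  have "((\<lambda>s. (t - s) powr b') has_integral (t - 0) powr (b'+1)/(b'+1)) {0..t}"
    using has_integral_powr_rev[of b' 0 t] b' t by auto
  hence dint: "(d has_integral B * (K * (t powr (b'+1)/(b'+1) * t powr (-b')))) {0..t}"
    unfolding d_def by (intro has_integral_mult_right has_integral_mult_left) auto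
  have dval: "B * (K * (t powr (b'+1)/(b'+1) * t powr (-b'))) = B * (K * t / (b'+1))"
    using t by (simp add: powr_add powr_minus field_simps)
  have dom: "norm (fb \<beta> t s * g s) \<le> d s" if "s \<in> {0..t}" for s
  proof -
    have "norm (g 0) \<le> B" using gB[of 0] t by auto
    hence B0: "0 \<le> B" using norm_ge_zero[of "g 0"] by linarith
    have "norm (fb \<beta> t s * g s) \<le> (K * ((t - s)/t) powr b') * B"
      unfolding norm_mult K_def b'_def using that t
      by (intro mult_mono fb_dom gB B0) (auto intro!: mult_nonneg_nonneg)
    also have "((t - s)/t) powr b' = (t - s) powr b' * t powr (-b')"
      by (subst powr_divide) (simp add: powr_minus divide_inverse)
    finally show ?thesis by (simp add: d_def mult.commute)
  qed
  have meas: "(\<lambda>s. fb \<beta> t s * g s) \<in> borel_measurable (lebesgue_on {0..<t})"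
    by (intro continuous_imp_measurable_on_sets_lebesgue continuous_intros fb_cont
          continuous_on_subset[OF g]) auto
  have sub1: "{x \<in> {0..t} - {0..<t}. P x} \<subseteq> {t}" for P :: "real \<Rightarrow> bool" by auto
  have sub2: "{x \<in> {0..<t} - {0..t}. P x} = {}" for P :: "real \<Rightarrow> bool" by auto
  have "d integrable_on {0..<t}"
  proof (rule integrable_spike_set[of d "{0..t}"])
    show "d integrable_on {0..t}" using dint by blast
    show "negligible {x \<in> {0..t} - {0..<t}. d x \<noteq> 0}"
      by (rule negligible_subset[OF negligible_sing sub1])
    show "negligible {x \<in> {0..<t} - {0..t}. d x \<noteq> 0}" unfolding sub2 by simp
  qed
  hence "(\<lambda>s. fb \<beta> t s * g s) integrable_on {0..<t}"
    by (rule measurable_bounded_by_integrable_imp_integrable[OF meas]) (use dom in auto)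
  thus int: "(\<lambda>s. fb \<beta> t s * g s) integrable_on {0..t}"
  proof (rule integrable_spike_set)
    show "negligible {x \<in> {0..<t} - {0..t}. fb \<beta> t x * g x \<noteq> 0}" unfolding sub2 by simp
    have "{x \<in> {0..t} - {0..<t}. fb \<beta> t x * g x \<noteq> 0} \<subseteq> {t}" by auto
    thus "negligible {x \<in> {0..t} - {0..<t}. fb \<beta> t x * g x \<noteq> 0}"
      by (rule negligible_subset[OF negligible_sing])
  qed
  have "norm (integral {0..t} (\<lambda>s. fb \<beta> t s * g s)) \<le> integral {0..t} d"
    using int dint dom by (intro integral_norm_bound_integral) auto
  also have "\<dots> = B * (K * t / (b'+1))" using dint dval by (simp add: integral_unique)
  finally show "norm (integral {0..t} (\<lambda>s. fb \<beta> t s * g s))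
           \<le> B * ((cosh t - 1) powr Re \<beta> * t / (min (Re \<beta>) 0 + 1))"
    by (simp add: K_def b'_def)
qed


lemma sin_lip: "\<bar>sin (a::real) - sin b\<bar> \<le> \<bar>a - b\<bar>"
proof -
  have "\<bar>sin a - sin b\<bar> = 2 * \<bar>sin ((a - b)/2)\<bar> * \<bar>cos ((a + b)/2)\<bar>"
    by (simp add: sin_diff_sin abs_mult)
  also have "\<dots> \<le> 2 * \<bar>(a - b)/2\<bar> * 1"
    by (intro mult_mono abs_sin_x_le_abs_x) auto
  finally show ?thesis by simp
qed

lemma cos_taylor2: "\<bar>cos (x + d) - cos x + d * sin x\<bar> \<le> (d::real)^2"
proof -
  define S where "S = {-\<bar>d\<bar>..\<bar>d\<bar>}"
  have "norm ((\<lambda>u. cos (x + u) - cos x + u * sin x) d - (\<lambda>u. cos (x + u) - cos x + u * sin x) 0)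
        \<le> \<bar>d\<bar> * norm (d - 0)"
  proof (rule field_differentiable_bound[where S=S and f'="\<lambda>u. - sin (x + u) + sin x"])
    show "convex S" by (simp add: S_def)
    fix z assume "z \<in> S"
    show "((\<lambda>u. cos (x + u) - cos x + u * sin x) has_field_derivative - sin (x + z) + sin x) (at z within S)"
      by (auto intro!: derivative_eq_intros)
    have "norm (- sin (x + z) + sin x) = \<bar>sin x - sin (x+z)\<bar>" by simp
    also have "\<dots> \<le> \<bar>x - (x + z)\<bar>" by (rule sin_lip)
    also have "\<dots> \<le> \<bar>d\<bar>" using \<open>z \<in> S\<close> by (auto simp: S_def)
    finally show "norm (- sin (x + z) + sin x) \<le> \<bar>d\<bar>" .
  qed (auto simp: S_def)
  thus ?thesis by (simp add: power2_eq_square abs_mult)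
qed

lemma norm_ssin: assumes "s \<in> {0..t}" shows "norm (complex_of_real (- (s * sin (l * s)))) \<le> t"
proof -
  have "\<bar>s\<bar> * \<bar>sin (l * s)\<bar> \<le> t * 1"
    using assms by (intro mult_mono) auto
  thus ?thesis by (simp only: norm_of_real norm_minus_cancel abs_minus_cancel abs_mult)
qed

definition II :: "complex \<Rightarrow> real \<Rightarrow> real \<Rightarrow> complex" where
  "II \<beta> t l = integral {0..t} (\<lambda>s. fb \<beta> t s * complex_of_real (cos (l * s)))"

definition DD :: "complex \<Rightarrow> real \<Rightarrow> real \<Rightarrow> complex" where
  "DD \<beta> t l = integral {0..t} (\<lambda>s. fb \<beta> t s * complex_of_real (- (s * sin (l * s))))"

definition JB :: "complex \<Rightarrow> real \<Rightarrow> real" where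
  "JB \<beta> t = (cosh t - 1) powr Re \<beta> * t / (min (Re \<beta>) 0 + 1)"

lemma II_bound: assumes "0 < t" "Re \<beta> > -1" shows "norm (II \<beta> t l) \<le> JB \<beta> t"
proof -
  have "norm (II \<beta> t l) \<le> 1 * JB \<beta> t"
    unfolding II_def JB_def
  proof (rule fb_int(2)[OF assms])
    show "continuous_on {0..t} (\<lambda>s. complex_of_real (cos (l * s)))"
      by (intro continuous_intros)
  qed auto
  thus ?thesis by simp
qed

lemma DD_bound: assumes "0 < t" "Re \<beta> > -1" shows "norm (DD \<beta> t l) \<le> t * JB \<beta> t"
proof -
  have "norm (DD \<beta> t l) \<le> t * JB \<beta> t"
    unfolding DD_def JB_def
  proof (rule fb_int(2)[OF assms])
    show "continuous_on {0..t} (\<lambda>s. complex_of_real (- (s * sin (l * s))))"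
      by (intro continuous_intros)
    fix s assume "s \<in> {0..t}"
    have "\<bar>s\<bar> * \<bar>sin (l * s)\<bar> \<le> t * 1"
      using \<open>s \<in> {0..t}\<close> by (intro mult_mono) auto
    thus "norm (complex_of_real (- (s * sin (l * s)))) \<le> t"
      by (simp only: norm_of_real norm_minus_cancel abs_minus_cancel abs_mult)
  qed
  thus ?thesis .
qed


lemma II_deriv:
  assumes t: "0 < t" and b: "Re \<beta> > -1"
  shows "((\<lambda>l. II \<beta> t l) has_vector_derivative DD \<beta> t l0) (at l0)"
proof -
  define D where "D = DD \<beta> t l0"
  have hI: "((\<lambda>s. fb \<beta> t s * complex_of_real (cos (l * s))) has_integral II \<beta> t l) {0..t}" for l
    unfolding II_def
    by (rule integrable_integral, rule fb_int(1)[OF t b, of _ 1]) (auto intro!: continuous_intros)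
  have hD: "((\<lambda>s. fb \<beta> t s * complex_of_real (- (s * sin (l0 * s)))) has_integral D) {0..t}"
    unfolding D_def DD_def
    by (rule integrable_integral, rule fb_int(1)[OF t b, of _ t])
       (intro continuous_intros, erule norm_ssin)
  have key: "norm (II \<beta> t y - (II \<beta> t l0 + (y - l0) *\<^sub>R D)) \<le> ((y - l0)^2 * t^2) * JB \<beta> t" for y
  proof -
    define g where "g = (\<lambda>s. complex_of_real (cos (y * s) - cos (l0 * s) + (y - l0) * (s * sin (l0 * s))))"
    have "((\<lambda>s. fb \<beta> t s * complex_of_real (cos (y * s)) - fb \<beta> t s * complex_of_real (cos (l0 * s))
           - (y - l0) *\<^sub>R (fb \<beta> t s * complex_of_real (- (s * sin (l0 * s)))))
          has_integral (II \<beta> t y - II \<beta> t l0 - (y - l0) *\<^sub>R D)) {0..t}"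
      by (intro has_integral_diff hI has_integral_cmul hD)
    moreover have "(\<lambda>s. fb \<beta> t s * complex_of_real (cos (y * s)) - fb \<beta> t s * complex_of_real (cos (l0 * s))
           - (y - l0) *\<^sub>R (fb \<beta> t s * complex_of_real (- (s * sin (l0 * s)))))
          = (\<lambda>s. fb \<beta> t s * g s)"
      by (rule ext) (simp add: g_def scaleR_conv_of_real algebra_simps)
    ultimately have eq: "integral {0..t} (\<lambda>s. fb \<beta> t s * g s) = II \<beta> t y - II \<beta> t l0 - (y - l0) *\<^sub>R D"
      by (simp add: integral_unique)
    have "norm (integral {0..t} (\<lambda>s. fb \<beta> t s * g s)) \<le> ((y - l0)^2 * t^2) * JB \<beta> t"
      unfolding JB_def
    proof (rule fb_int(2)[OF t b])
      show "continuous_on {0..t} g" unfolding g_def by (intro continuous_intros)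
      fix s assume s: "s \<in> {0..t}"
      have "\<bar>cos (l0 * s + (y - l0) * s) - cos (l0 * s) + ((y - l0) * s) * sin (l0 * s)\<bar> \<le> ((y - l0) * s)^2"
        by (rule cos_taylor2)
      also have "\<dots> \<le> (y - l0)^2 * t^2"
        using s by (auto simp: power_mult_distrib intro!: mult_left_mono power_mono)
      finally have "\<bar>cos (l0 * s + (y - l0) * s) - cos (l0 * s) + ((y - l0) * s) * sin (l0 * s)\<bar>
          \<le> (y - l0)^2 * t^2" .
      moreover have "g s = complex_of_real (cos (l0 * s + (y - l0) * s) - cos (l0 * s) + ((y - l0) * s) * sin (l0 * s))"
        unfolding g_def by (simp add: algebra_simps)
      ultimately show "norm (g s) \<le> (y - l0)^2 * t^2" by (simp only: norm_of_real)
    qed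
    moreover have "II \<beta> t y - (II \<beta> t l0 + (y - l0) *\<^sub>R D) = integral {0..t} (\<lambda>s. fb \<beta> t s * g s)"
      unfolding eq by (simp add: algebra_simps)
    ultimately show ?thesis by simp
  qed
  show ?thesis
    unfolding has_vector_derivative_def has_derivative_at2 D_def[symmetric]
  proof (intro conjI)
    show "bounded_linear (\<lambda>x. x *\<^sub>R D)" by (rule bounded_linear_scaleR_left)
    show "((\<lambda>y. (1 / norm (y - l0)) *\<^sub>R (II \<beta> t y - (II \<beta> t l0 + (y - l0) *\<^sub>R D))) \<longlongrightarrow> 0) (at l0)"
    proof (rule Lim_null_comparison)
      show "\<forall>\<^sub>F y in at l0. norm ((1 / norm (y - l0)) *\<^sub>R (II \<beta> t y - (II \<beta> t l0 + (y - l0) *\<^sub>R D)))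
             \<le> \<bar>y - l0\<bar> * (t^2 * JB \<beta> t)"
      proof (rule always_eventually, rule allI)
        fix y
        show "norm ((1 / norm (y - l0)) *\<^sub>R (II \<beta> t y - (II \<beta> t l0 + (y - l0) *\<^sub>R D)))
             \<le> \<bar>y - l0\<bar> * (t^2 * JB \<beta> t)"
        proof (cases "y = l0")
          case True thus ?thesis by simp
        next
          case False
          have "norm ((1 / norm (y - l0)) *\<^sub>R (II \<beta> t y - (II \<beta> t l0 + (y - l0) *\<^sub>R D)))
                = norm (II \<beta> t y - (II \<beta> t l0 + (y - l0) *\<^sub>R D)) / \<bar>y - l0\<bar>" by simp
          also have "\<dots> \<le> ((y - l0)^2 * t^2) * JB \<beta> t / \<bar>y - l0\<bar>"
            using key False by (intro divide_right_mono) auto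
          also have "\<dots> = \<bar>y - l0\<bar> * (t^2 * JB \<beta> t)"
            using False by (simp add: power2_eq_square field_simps abs_mult_self)
          finally show ?thesis .
        qed
      qed
      show "((\<lambda>y. \<bar>y - l0\<bar> * (t^2 * JB \<beta> t)) \<longlongrightarrow> 0) (at l0)"
        by (rule tendsto_eq_intros refl | simp)+
    qed
  qed
qed



lemma exp_poly_bound: assumes "p > 0" "x \<ge> 0" shows "x powr p \<le> p powr p * exp (x::real)"
proof -
  have "x / p + 1 \<le> exp (x / p)" using exp_ge_add_one_self[of "x/p"] by linarith
  hence "x \<le> p * exp (x / p)" using assms by (simp add: field_simps)
  hence "x powr p \<le> (p * exp (x / p)) powr p" using assms by (intro powr_mono2) auto
  also have "\<dots> = p powr p * exp (x / p) powr p" by (rule powr_mult)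
  also have "exp (x / p) powr p = exp x" using assms by (simp add: powr_def)
  finally show ?thesis .
qed

lemma exp_neg_bound: assumes "p > 0" "(x::real) > 0" shows "exp (- x) \<le> p powr p * x powr (-p)"
proof -
  have "x powr p \<le> p powr p * exp x" by (rule exp_poly_bound) (use assms in auto)
  hence "x powr p * exp (-x) \<le> p powr p" by (simp add: exp_minus field_simps)
  hence "exp (-x) \<le> p powr p / x powr p" using assms by (simp add: field_simps)
  thus ?thesis by (simp add: powr_minus divide_inverse)
qed

lemma one_plus_powr_bound: "\<exists>K>0. \<forall>u\<ge>0. (1 + u) powr (b::real) \<le> K * exp (u/4)"
proof (cases "b \<le> 0")
  case True
  show ?thesis
  proof (intro exI[of _ 1] conjI allI impI)
    fix u :: real assume "u \<ge> 0"
    have "(1 + u) powr b \<le> 1 powr b" using True \<open>u \<ge> 0\<close> by (intro powr_mono2') auto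
    also have "\<dots> \<le> exp (u/4)" using \<open>u \<ge> 0\<close> by simp
    finally show "(1 + u) powr b \<le> 1 * exp (u/4)" by simp
  qed auto
next
  case False
  show ?thesis
  proof (intro exI[of _ "4 powr b * b powr b * exp (1/4)"] conjI allI impI)
    show "0 < 4 powr b * b powr b * exp (1/4)" using False by simp
    fix u :: real assume "u \<ge> 0"
    have "1 + u = 4 * ((1 + u)/4)" by simp
    hence "(1 + u) powr b = (4 * ((1 + u)/4)) powr b" by (rule arg_cong)
    also have "\<dots> = 4 powr b * ((1 + u)/4) powr b" by (rule powr_mult)
    also have "((1 + u)/4) powr b \<le> b powr b * exp ((1 + u)/4)"
      using False \<open>u \<ge> 0\<close> by (intro exp_poly_bound) auto
    also have "exp ((1 + u)/4) = exp (1/4) * exp (u/4)" by (simp add: exp_add[symmetric] add_divide_distrib)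
    finally show "(1 + u) powr b \<le> 4 powr b * b powr b * exp (1/4) * exp (u/4)"
      by (simp add: mult_ac)
  qed
qed

definition FF :: "complex \<Rightarrow> real \<Rightarrow> real \<Rightarrow> complex \<Rightarrow> complex" where
  "FF \<beta> t l z = (complex_of_real (cosh t) - cosh z) powr \<beta> * exp (\<i> * complex_of_real l * z)"

lemma FF_real: "FF \<beta> t l (complex_of_real s) = fb \<beta> t s * exp (\<i> * complex_of_real (l * s))"
  by (simp add: FF_def fb_def cosh_of_real_complex mult.assoc)

lemma norm_FF_le:
  "norm (FF \<beta> t l z) \<le> norm (complex_of_real (cosh t) - cosh z) powr Re \<beta> * exp (\<bar>Im \<beta>\<bar> * pi) * exp (- (l * Im z))"
proof -
  define w where "w = complex_of_real (cosh t) - cosh z"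
  have "norm (w powr \<beta>) = norm w powr Re \<beta> * exp (- Im \<beta> * Arg w)" by (rule norm_powr_complex)
  also have "exp (- Im \<beta> * Arg w) \<le> exp (\<bar>Im \<beta>\<bar> * pi)"
  proof -
    have "\<bar>Arg w\<bar> \<le> pi" using Arg_bounded[of w] by auto
    hence "\<bar>Im \<beta> * Arg w\<bar> \<le> \<bar>Im \<beta>\<bar> * pi" by (simp add: abs_mult mult_left_mono)
    thus ?thesis by simp
  qed
  finally have 1: "norm (w powr \<beta>) \<le> norm w powr Re \<beta> * exp (\<bar>Im \<beta>\<bar> * pi)"
    by (simp add: mult_left_mono)
  have 2: "norm (exp (\<i> * complex_of_real l * z)) = exp (- (l * Im z))" by (simp add: norm_exp_eq_Re)
  show ?thesis unfolding FF_def norm_mult w_def[symmetric] 2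
    using 1 by (intro mult_right_mono) auto
qed

definition SS :: "real \<Rightarrow> complex set" where
  "SS t = {z. Re z > -t} \<inter> {z. Re z < t} \<inter> {z. Im z > -1} \<inter> {z. Im z < 3/2}"

lemma convex_SS: "convex (SS t)"
  unfolding SS_def
  by (intro convex_Int convex_halfspace_Re_gt convex_halfspace_Re_lt convex_halfspace_Im_gt convex_halfspace_Im_lt)

lemma open_SS: "open (SS t)"
  unfolding SS_def
  by (intro open_Int open_halfspace_Re_gt open_halfspace_Re_lt open_halfspace_Im_gt open_halfspace_Im_lt)

lemma Re_w_pos: assumes "z \<in> SS t" shows "Re (complex_of_real (cosh t) - cosh z) > 0"
proof -
  have x: "\<bar>Re z\<bar> < t" and y: "\<bar>Im z\<bar> < 3/2" using assms by (auto simp: SS_def)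
  have "cos (Im z) > 0"
    using y pi_gt3 by (intro cos_gt_zero_pi) auto
  moreover have "cos (Im z) \<le> 1" by simp
  moreover have "cosh (Re z) < cosh t"
  proof -
    have "cosh (Re z) = cosh \<bar>Re z\<bar>" by (simp add: abs_if)
    also have "\<dots> < cosh t" using x by (intro cosh_less_mono) auto
    finally show ?thesis .
  qed
  moreover have "cosh (Re z) > 0" by (simp add: cosh_real_pos)
  ultimately have "cosh (Re z) * cos (Im z) < cosh t"
    using \<open>cos (Im z) \<le> 1\<close> \<open>cosh (Re z) > 0\<close> \<open>cosh (Re z) < cosh t\<close>
      mult_left_le[of "cos (Im z)" "cosh (Re z)"] by linarith
  thus ?thesis by (simp add: Re_cosh_complex)
qed

lemma cosh_holo: "cosh holomorphic_on (S :: complex set)"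
proof (rule holomorphic_onI)
  fix x :: complex assume "x \<in> S"
  have "(cosh has_field_derivative sinh x) (at x)"
    unfolding sinh_def cosh_def by (auto intro!: derivative_eq_intros)
  thus "cosh field_differentiable at x within S"
    using field_differentiable_at_within field_differentiable_def by blast
qed

lemma FF_holo: "FF \<beta> t l holomorphic_on SS t"
  unfolding FF_def
proof (intro holomorphic_intros cosh_holo)
  fix z assume "z \<in> SS t"
  thus "complex_of_real (cosh t) - cosh z \<notin> \<real>\<^sub>\<le>\<^sub>0"
    using Re_w_pos[of z t] by (auto simp: complex_nonpos_Reals_iff)
qed


lemma cosh_abs_real: "cosh \<bar>x::real\<bar> = cosh x"
  by (simp add: abs_if)

lemma sinh_abs_real: "\<bar>sinh (x::real)\<bar> = sinh \<bar>x\<bar>"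
  by (simp add: abs_if)

lemma w_vert_bounds:
  assumes t: "0 < t" "t \<le> 1" and e: "0 < e" "e \<le> t/2" and x: "\<bar>x\<bar> = t - e" and y: "0 \<le> y" "y \<le> t"
  shows "t * (e + y) / 8 \<le> norm (complex_of_real (cosh t) - cosh (Complex x y))"
    and "norm (complex_of_real (cosh t) - cosh (Complex x y)) \<le> 8 * (t * (e + y))"
proof -
  define w where "w = complex_of_real (cosh t) - cosh (Complex x y)"
  define x0 where "x0 = t - e"
  have x0: "t/2 \<le> x0" "x0 < t" "0 < x0" using t e by (auto simp: x0_def)
  have cxx: "cosh x = cosh x0" by (metis cosh_abs_real x x0_def)
  have Rew: "Re w = (cosh t - cosh x0) + cosh x0 * (1 - cos y)"
    unfolding w_def by (simp add: Re_cosh_complex algebra_simps cxx)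
  have Imw: "\<bar>Im w\<bar> = sinh x0 * sin y"
  proof -
    have "sin y \<ge> 0" using y t pi_gt3 by (intro sin_ge_zero) auto
    thus ?thesis unfolding w_def using x
      by (simp add: Im_cosh_complex abs_mult sinh_abs_real x0_def)
  qed
  have c1: "(t/2) * e \<le> cosh t - cosh x0"
    using cosh_diff_lower[of t x0] x0 t by (simp add: x0_def)
  have c2: "cosh t - cosh x0 \<le> 2 * t * e"
    using cosh_diff_upper[of x0 t] x0 t by (simp add: x0_def)
  have ch: "1 \<le> cosh x0" "cosh x0 \<le> 2" using cosh_real_ge_1 cosh_le2[of x0] x0 t by auto
  have cy: "0 \<le> 1 - cos y" "1 - cos y \<le> y^2/2" using one_minus_cos_le[of y] y by auto
  have sy: "y/2 \<le> sin y" "sin y \<le> y" using sin_ge_half[of y] sin_x_le_x[of y] y t by auto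
  have sh: "x0 \<le> sinh x0" "sinh x0 \<le> 2 * x0" using sinh_ge[of x0] sinh_le2[of x0] x0 t by auto
  have "0 \<le> cosh x0 * (1 - cos y)" using ch cy by (intro mult_nonneg_nonneg) auto
  hence ReL: "(t/2) * e \<le> Re w" using Rew c1 by linarith
  have ImL: "t * y / 4 \<le> \<bar>Im w\<bar>"
  proof -
    have "t * y \<le> (2*x0) * y" using x0 y by (intro mult_right_mono) auto
    hence "t * y / 4 \<le> x0 * (y/2)" by simp
    also have "\<dots> \<le> sinh x0 * sin y" using sh sy x0 y by (intro mult_mono) auto
    finally show ?thesis using Imw by simp
  qed
  have "t * (e + y) / 8 \<le> (Re w + \<bar>Im w\<bar>) / 2"
  proof -
    have aux: "(a + c)/8 \<le> (R + I)/2" if "0 \<le> a" "0 \<le> c" "a/2 \<le> R" "c/4 \<le> I" for a c R I :: real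
      using that by argo
    have "t*(e+y) = t*e + t*y" by (simp add: algebra_simps)
    moreover have "t*e/2 \<le> Re w" using ReL by simp
    ultimately show ?thesis using aux[of "t*e" "t*y" "Re w" "\<bar>Im w\<bar>"] ImL t e y by simp
  qed
  also have "\<dots> \<le> norm w"
    using abs_Re_le_cmod[of w] abs_Im_le_cmod[of w] abs_ge_self[of "Re w"] by argo
  finally show "t * (e + y) / 8 \<le> norm (complex_of_real (cosh t) - cosh (Complex x y))"
    by (simp add: w_def)
  have ReU: "Re w \<le> 2 * t * e + t * y"
  proof -
    have "cosh x0 * (1 - cos y) \<le> 2 * (y^2/2)" using ch cy by (intro mult_mono) auto
    also have "\<dots> \<le> t * y" using y by (simp add: power2_eq_square mult_right_mono)
    finally show ?thesis using Rew c2 by linarith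
  qed
  have ImU: "\<bar>Im w\<bar> \<le> 2 * t * y"
  proof -
    have "sinh x0 * sin y \<le> (2 * t) * y" using sh sy x0 y by (intro mult_mono) auto
    thus ?thesis using Imw by simp
  qed
  have "norm w \<le> \<bar>Re w\<bar> + \<bar>Im w\<bar>" by (rule cmod_le)
  also have "\<dots> \<le> 8 * (t * (e + y))"
  proof -
    have "0 \<le> t * e" "0 \<le> t * y" using t e y by auto
    moreover have "0 \<le> (t/2) * e" using t e by simp
    hence "0 \<le> Re w" using ReL by linarith
    ultimately show ?thesis using ReU ImU by (simp add: algebra_simps)
  qed
  finally show "norm (complex_of_real (cosh t) - cosh (Complex x y)) \<le> 8 * (t * (e + y))"
    by (simp add: w_def)
qed

lemma w_top_bounds:
  assumes t: "0 < t" "t \<le> 1" and x: "\<bar>x\<bar> \<le> t"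
  shows "t^2 / 8 \<le> norm (complex_of_real (cosh t) - cosh (Complex x t))"
    and "norm (complex_of_real (cosh t) - cosh (Complex x t)) \<le> 8 * t^2"
proof -
  define w where "w = complex_of_real (cosh t) - cosh (Complex x t)"
  have Rew: "Re w = (cosh t - cosh x) + cosh x * (1 - cos t)"
    unfolding w_def by (simp add: Re_cosh_complex algebra_simps)
  have Imw: "\<bar>Im w\<bar> = sinh \<bar>x\<bar> * sin t"
  proof -
    have "sin t \<ge> 0" using t pi_gt3 by (intro sin_ge_zero) auto
    hence "\<bar>Im w\<bar> = \<bar>sinh x\<bar> * sin t" unfolding w_def by (simp add: Im_cosh_complex abs_mult)
    thus ?thesis by (simp only: sinh_abs_real)
  qed
  have cx: "cosh x \<le> cosh t" using cosh_le_mono[of "\<bar>x\<bar>" t] x by (simp add: cosh_abs_real)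
  have ch: "1 \<le> cosh x" "cosh x \<le> 2" using cosh_real_ge_1 cosh_le2[of x] x t by auto
  have ct: "t^2/4 \<le> 1 - cos t" "1 - cos t \<le> t^2/2" using one_minus_cos_le[of t] one_minus_cos_ge[of t] t by auto
  have c2: "cosh t - 1 \<le> 2 * t * t" using cosh_diff_upper[of 0 t] t by simp
  have "1 * (t^2/4) \<le> cosh x * (1 - cos t)" using ch ct by (intro mult_mono) auto
  hence ReL: "t^2/4 \<le> Re w" using Rew cx by linarith
  thus "t^2 / 8 \<le> norm (complex_of_real (cosh t) - cosh (Complex x t))"
    using abs_Re_le_cmod[of w] t by (simp add: w_def)
  have "cosh x * (1 - cos t) \<le> 2 * (t^2/2)" using ch ct by (intro mult_mono) auto
  hence ReU: "Re w \<le> 3 * t^2" using Rew c2 ch by (simp add: power2_eq_square)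
  have sh: "sinh \<bar>x\<bar> \<le> 2 * t" using sinh_le2[of "\<bar>x\<bar>"] x t by auto
  have st: "0 \<le> sin t" using t pi_gt3 by (intro sin_ge_zero) auto
  have "sinh \<bar>x\<bar> * sin t \<le> (2 * t) * t"
    by (rule mult_mono[OF sh sin_x_le_x]) (use t st in auto)
  hence ImU: "\<bar>Im w\<bar> \<le> 2 * t^2" using Imw by (simp add: power2_eq_square)
  have "norm w \<le> \<bar>Re w\<bar> + \<bar>Im w\<bar>" by (rule cmod_le)
  also have "\<dots> \<le> 8 * t^2"
  proof -
    have "0 \<le> t^2" by simp
    hence "0 \<le> Re w" using ReL by linarith
    thus ?thesis using ReU ImU \<open>0 \<le> t^2\<close> by linarith
  qed
  finally show "norm (complex_of_real (cosh t) - cosh (Complex x t)) \<le> 8 * t^2"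
    by (simp add: w_def)
qed


definition Kb :: "real \<Rightarrow> real" where
  "Kb b = (SOME K. K > 0 \<and> (\<forall>u\<ge>0. (1 + u) powr b \<le> K * exp (u/4)))"

lemma Kb: "Kb b > 0" "u \<ge> 0 \<Longrightarrow> (1 + u) powr b \<le> Kb b * exp (u/4)"
proof -
  have "Kb b > 0 \<and> (\<forall>u\<ge>0. (1 + u) powr b \<le> Kb b * exp (u/4))"
    unfolding Kb_def by (rule someI_ex) (rule one_plus_powr_bound)
  thus "Kb b > 0" "u \<ge> 0 \<Longrightarrow> (1 + u) powr b \<le> Kb b * exp (u/4)" by auto
qed

lemma exp_int: assumes "(c::real) > 0" "(T::real) \<ge> 0"
  shows "((\<lambda>y. exp (- (c * y))) has_integral (1 - exp (- (c * T))) / c) {0..T}"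
proof -
  have "((\<lambda>y. exp (- (c * y))) has_integral ((\<lambda>y. - exp (- (c * y)) / c) T - (\<lambda>y. - exp (- (c * y)) / c) 0)) {0..T}"
  proof (rule fundamental_theorem_of_calculus[where f="\<lambda>y::real. - exp (- (c * y)) / (c::real)"])
    show "0 \<le> T" using assms by simp
    fix x :: real assume "x \<in> {0..T}"
    have "((\<lambda>y. - exp (- (c * y)) / c) has_real_derivative exp (- (c * x))) (at x)"
      using assms by (auto intro!: derivative_eq_intros DERIV_cdivide)
    thus "((\<lambda>y. - exp (- (c * y)) / c) has_vector_derivative exp (- (c * x))) (at x within {0..T})"
      by (simp add: has_real_derivative_iff_has_vector_derivative has_vector_derivative_at_within)
  qed
  thus ?thesis by (simp add: diff_divide_distrib)
qed

lemma vert_bound: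
  assumes t: "0 < t" "t \<le> 1" and l: "0 < l" "1 \<le> l * t" and b: "Re \<beta> > -1"
    and x: "\<bar>x\<bar> = t - 1/(2*l)"
  shows "norm (contour_integral (linepath (Complex x 0) (Complex x t)) (FF \<beta> t l))
         \<le> (2 * exp (\<bar>Im \<beta>\<bar> * pi) * 8 powr \<bar>Re \<beta>\<bar> * Kb (Re \<beta>) * 2 powr \<bar>Re \<beta>\<bar>)
            * t powr Re \<beta> * l powr (- (Re \<beta> + 1))"
proof -
  define e where "e = 1/(2*l)"
  define b where "b = Re \<beta>"
  define E where "E = exp (\<bar>Im \<beta>\<bar> * pi)"
  define A0 where "A0 = E * 8 powr \<bar>b\<bar> * t powr b * e powr b * Kb b"
  have e: "0 < e" "e \<le> t/2" using t l by (auto simp: e_def field_simps)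
  have A0: "0 \<le> A0" using Kb(1)[of b] by (simp add: A0_def E_def)
  have seg: "closed_segment (Complex x 0) (Complex x t) \<subseteq> SS t"
  proof -
    have "closed_segment (Complex x 0) (Complex x t) = {z. Re z = x \<and> Im z \<in> {0..t}}"
      using t by (simp add: closed_segment_same_Re closed_segment_eq_real_ivl)
    also have "\<dots> \<subseteq> SS t"
    proof -
      have "\<bar>x\<bar> < t" using x l by simp
      thus ?thesis using t pi_gt3 by (auto simp: SS_def abs_less_iff)
    qed
    finally show ?thesis .
  qed
  have ci: "FF \<beta> t l contour_integrable_on linepath (Complex x 0) (Complex x t)"
    by (rule contour_integrable_holomorphic_simple[OF FF_holo open_SS]) (use seg in auto)
  define I where "I = contour_integral (linepath (Complex x 0) (Complex x t)) (FF \<beta> t l)"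
  have "(FF \<beta> t l has_contour_integral I) (linepath (Complex x 0) (Complex x t))"
    using ci by (simp add: I_def has_contour_integral_integral)
  hence hi: "((\<lambda>y. FF \<beta> t l (Complex x y)) has_integral (-\<i> * I)) {0..t}"
    using t by (subst (asm) has_contour_integral_linepath_same_Re_iff[where c=x and a=0 and b=t]) auto
  have pw: "norm (FF \<beta> t l (Complex x y)) \<le> A0 * exp (- ((l/2) * y))" if y: "y \<in> {0..t}" for y
  proof -
    define w where "w = complex_of_real (cosh t) - cosh (Complex x y)"
    have wb: "t * (e + y) / 8 \<le> norm w" "norm w \<le> 8 * (t * (e + y))"
      using w_vert_bounds[OF t e, of x y] x y by (auto simp: w_def e_def)
    have u: "0 < t * (e + y)" using t e y by auto
    have "norm w powr b \<le> 8 powr \<bar>b\<bar> * (t * (e + y)) powr b"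
      by (rule powr_two_sided) (use wb u in auto)
    also have "t * (e + y) = t * (e * (1 + 2 * l * y))" using l by (simp add: e_def field_simps)
    also have "(t * (e * (1 + 2 * l * y))) powr b = t powr b * (e powr b * (1 + 2 * l * y) powr b)"
      by (simp add: powr_mult)
    also have "(1 + 2 * l * y) powr b \<le> Kb b * exp ((2 * l * y)/4)"
      using Kb(2)[of "2*l*y" b] l y by auto
    finally have 1: "norm w powr b \<le> 8 powr \<bar>b\<bar> * (t powr b * (e powr b * (Kb b * exp ((2 * l * y)/4))))"
      by (simp add: mult_left_mono)
    have "norm (FF \<beta> t l (Complex x y)) \<le> norm w powr b * E * exp (- (l * y))"
      using norm_FF_le[of \<beta> t l "Complex x y"] by (simp add: w_def b_def E_def)
    also have "\<dots> \<le> (8 powr \<bar>b\<bar> * (t powr b * (e powr b * (Kb b * exp ((2 * l * y)/4))))) * E * exp (- (l * y))"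
      using 1 by (intro mult_right_mono) (auto simp: E_def)
    also have "\<dots> = A0 * (exp ((2 * l * y)/4) * exp (- (l * y)))" by (simp add: A0_def mult_ac)
    also have "exp ((2 * l * y)/4) * exp (- (l * y)) = exp (- ((l/2) * y))"
      by (simp add: exp_add[symmetric] field_simps)
    finally show ?thesis .
  qed
  have ei: "((\<lambda>y. exp (- ((l/2) * y))) has_integral (1 - exp (- ((l/2) * t))) / (l/2)) {0..t}"
    using exp_int[of "l/2" t] l t by auto
  have "norm I = norm (integral {0..t} (\<lambda>y. FF \<beta> t l (Complex x y)))"
    using hi by (simp add: integral_unique norm_mult)
  also have "\<dots> \<le> integral {0..t} (\<lambda>y. A0 * exp (- ((l/2) * y)))"
  proof (rule integral_norm_bound_integral)
    show "(\<lambda>y. FF \<beta> t l (Complex x y)) integrable_on {0..t}" using hi by blast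
    show "(\<lambda>y. A0 * exp (- ((l/2) * y))) integrable_on {0..t}"
      by (rule integrable_on_mult_right) (use ei in blast)
  qed (use pw in auto)
  also have "\<dots> = A0 * ((1 - exp (- ((l/2) * t))) / (l/2))"
    using ei by (simp add: integral_unique has_integral_mult_right)
  also have "\<dots> \<le> A0 * (1 / (l/2))"
    using A0 l by (intro mult_left_mono divide_right_mono) auto
  also have "\<dots> = 2 * E * 8 powr \<bar>b\<bar> * Kb b * t powr b * (e powr b / l)"
    by (simp add: A0_def field_simps)
  also have "\<dots> \<le> 2 * E * 8 powr \<bar>b\<bar> * Kb b * t powr b * (2 powr \<bar>b\<bar> * l powr (- (b + 1)))"
  proof (rule mult_left_mono)
    show "0 \<le> 2 * E * 8 powr \<bar>b\<bar> * Kb b * t powr b" using Kb(1)[of b] by (simp add: E_def)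
  show "e powr b / l \<le> 2 powr \<bar>b\<bar> * l powr (- (b + 1))"
  proof -
    have "e powr b = 1 powr b / (2 * l) powr b" unfolding e_def by (rule powr_divide)
    also have "\<dots> = inverse (2 powr b) * inverse (l powr b)"
      by (simp add: powr_mult divide_inverse inverse_mult_distrib)
    also have "\<dots> = 2 powr (-b) * l powr (-b)" by (simp only: powr_minus)
    also have "2 powr (-b) \<le> 2 powr \<bar>b\<bar>" by (intro powr_mono) auto
    finally have "e powr b \<le> 2 powr \<bar>b\<bar> * l powr (-b)" by (simp add: mult_right_mono)
    hence "e powr b / l \<le> 2 powr \<bar>b\<bar> * l powr (-b) / l" using l by (intro divide_right_mono) auto
    hence "e powr b / l \<le> 2 powr \<bar>b\<bar> * (l powr (-b) / l)" by simp
    also have "l powr (-b) / l = l powr (- (b + 1))"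
    proof -
      have "l powr (-b) / l powr 1 = l powr (-b - 1)" by (rule powr_diff[symmetric])
      thus ?thesis using l by simp
    qed
    finally show ?thesis by simp
  qed
  qed
  finally show ?thesis by (simp add: I_def b_def E_def mult_ac)
qed


lemma top_bound:
  assumes t: "0 < t" "t \<le> 1" and l: "0 < l" "1 \<le> l * t" and b: "Re \<beta> > -1"
    and x0: "0 \<le> x0" "x0 < t"
  shows "norm (contour_integral (linepath (Complex x0 t) (Complex (-x0) t)) (FF \<beta> t l))
         \<le> (2 * exp (\<bar>Im \<beta>\<bar> * pi) * 8 powr \<bar>Re \<beta>\<bar> * (Re \<beta> + 1) powr (Re \<beta> + 1))
            * t powr Re \<beta> * l powr (- (Re \<beta> + 1))"
proof -
  define b where "b = Re \<beta>"
  define p where "p = b + 1"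
  define E where "E = exp (\<bar>Im \<beta>\<bar> * pi)"
  define B where "B = E * 8 powr \<bar>b\<bar> * (t * t) powr b * exp (- (l * t))"
  have p: "p > 0" using b by (simp add: p_def b_def)
  have seg_eq: "closed_segment (Complex x0 t) (Complex (-x0) t) = {z. Im z = t \<and> Re z \<in> {-x0..x0}}"
    using x0 by (auto simp: closed_segment_same_Im closed_segment_eq_real_ivl)
  have seg: "closed_segment (Complex x0 t) (Complex (-x0) t) \<subseteq> SS t"
    unfolding seg_eq using t x0 pi_gt3 by (auto simp: SS_def)
  have ci: "FF \<beta> t l contour_integrable_on linepath (Complex x0 t) (Complex (-x0) t)"
    by (rule contour_integrable_holomorphic_simple[OF FF_holo open_SS]) (use seg in auto)
  have pw: "norm (FF \<beta> t l z) \<le> B" if z: "z \<in> closed_segment (Complex x0 t) (Complex (-x0) t)" for z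
  proof -
    have zz: "z = Complex (Re z) t" "\<bar>Re z\<bar> \<le> t" using z x0 unfolding seg_eq by (auto simp: complex_eq_iff)
    define w where "w = complex_of_real (cosh t) - cosh z"
    have wb: "(t * t) / 8 \<le> norm w" "norm w \<le> 8 * (t * t)"
      using w_top_bounds[OF t zz(2)] zz(1) by (simp_all add: w_def power2_eq_square)
    have "norm w powr b \<le> 8 powr \<bar>b\<bar> * (t * t) powr b"
      by (rule powr_two_sided) (use wb t in auto)
    have "norm (FF \<beta> t l z) \<le> norm w powr b * E * exp (- (l * t))"
    proof -
      have "Im z = t" using z unfolding seg_eq by auto
      thus ?thesis using norm_FF_le[of \<beta> t l z] by (simp add: w_def b_def E_def)
    qed
    also have "\<dots> \<le> (8 powr \<bar>b\<bar> * (t * t) powr b) * E * exp (- (l * t))"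
      using \<open>norm w powr b \<le> _\<close> by (intro mult_right_mono) (auto simp: E_def)
    finally show ?thesis by (simp add: B_def mult_ac)
  qed
  have "norm (contour_integral (linepath (Complex x0 t) (Complex (-x0) t)) (FF \<beta> t l))
        \<le> B * norm (Complex (-x0) t - Complex x0 t)"
    by (rule contour_integral_bound_linepath[OF ci _ pw]) (auto simp: B_def E_def)
  also have "norm (Complex (-x0) t - Complex x0 t) = 2 * x0"
  proof -
    have "Complex (-x0) t - Complex x0 t = complex_of_real (-(2*x0))" by (simp add: complex_eq_iff)
    thus ?thesis using x0 by simp
  qed
  also have "B * (2 * x0) \<le> B * (2 * t)"
    using x0 by (intro mult_left_mono) (auto simp: B_def E_def)
  also have "B * (2 * t) = 2 * E * 8 powr \<bar>b\<bar> * (t powr b * t powr b * t) * exp (- (l * t))"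
    by (simp add: B_def powr_mult mult_ac)
  also have "\<dots> \<le> 2 * E * 8 powr \<bar>b\<bar> * (t powr b * t powr b * t) * (p powr p * (l * t) powr (-p))"
    using exp_neg_bound[OF p, of "l*t"] l t by (intro mult_left_mono) (auto simp: E_def)
  also have "(l * t) powr (-p) = l powr (-p) * t powr (-p)" by (rule powr_mult)
  also have "2 * E * 8 powr \<bar>b\<bar> * (t powr b * t powr b * t) * (p powr p * (l powr (-p) * t powr (-p)))
            = 2 * E * 8 powr \<bar>b\<bar> * p powr p * t powr b * l powr (-p) * (t powr b * t powr 1 * t powr (-p))"
    using t by (simp add: mult_ac)
  also have "t powr b * t powr 1 * t powr (-p) = 1"
  proof -
    have "t powr b * t powr 1 * t powr (-p) = t powr (b + 1 + (-p))" by (simp only: powr_add)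
    thus ?thesis using t by (simp add: p_def)
  qed
  finally show ?thesis by (simp add: b_def p_def E_def)
qed


lemma rect_bound:
  assumes t: "0 < t" "t \<le> 1" and x0: "0 < x0" "x0 < t"
  shows "norm (integral {-x0..x0} (\<lambda>s. FF \<beta> t l (complex_of_real s)))
         \<le> norm (contour_integral (linepath (Complex x0 0) (Complex x0 t)) (FF \<beta> t l))
          + norm (contour_integral (linepath (Complex x0 t) (Complex (-x0) t)) (FF \<beta> t l))
          + norm (contour_integral (linepath (Complex (-x0) 0) (Complex (-x0) t)) (FF \<beta> t l))"
proof -
  define F where "F = FF \<beta> t l"
  define a1 a2 a3 a4 where "a1 = Complex (-x0) 0" and "a2 = Complex x0 0"
    and "a3 = Complex x0 t" and "a4 = Complex (-x0) t"
  have cb: "cbox a1 a3 \<subseteq> SS t"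
    using x0 t pi_gt3 by (auto simp: a1_def a3_def SS_def in_cbox_complex_iff)
  have holo: "F holomorphic_on SS t" unfolding F_def by (rule FF_holo)
  have "(F has_contour_integral 0) (rectpath a1 a3)"
  proof (rule Cauchy_theorem_convex_simple[OF holo convex_SS])
    show "path_image (rectpath a1 a3) \<subseteq> SS t"
      using path_image_rectpath_subset_cbox[of a1 a3] cb x0 t by (auto simp: a1_def a3_def)
  qed auto
  hence zero: "contour_integral (rectpath a1 a3) F = 0" by (rule contour_integral_unique)
  have rp: "rectpath a1 a3 = linepath a1 a2 +++ linepath a2 a3 +++ linepath a3 a4 +++ linepath a4 a1"
    by (simp add: rectpath_def Let_def a1_def a2_def a3_def a4_def)
  have segsub: "closed_segment p q \<subseteq> SS t" if "p \<in> cbox a1 a3" "q \<in> cbox a1 a3" for p q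
  proof -
    have "closed_segment p q \<subseteq> cbox a1 a3" using that by (intro closed_segment_subset) auto
    thus ?thesis using cb by auto
  qed
  have inbox: "a1 \<in> cbox a1 a3" "a2 \<in> cbox a1 a3" "a3 \<in> cbox a1 a3" "a4 \<in> cbox a1 a3"
    using x0 t by (auto simp: a1_def a2_def a3_def a4_def in_cbox_complex_iff)
  have ci: "F contour_integrable_on linepath p q" if "p \<in> cbox a1 a3" "q \<in> cbox a1 a3" for p q
    by (rule contour_integrable_holomorphic_simple[OF holo open_SS]) (use segsub[OF that] in auto)
  have cont: "continuous_on (closed_segment p q) F" if "p \<in> cbox a1 a3" "q \<in> cbox a1 a3" for p q
    using holomorphic_on_imp_continuous_on[OF holo] segsub[OF that] by (rule continuous_on_subset)
  have sum: "contour_integral (linepath a1 a2) F + contour_integral (linepath a2 a3) F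
             + contour_integral (linepath a3 a4) F + contour_integral (linepath a4 a1) F = 0"
    using zero unfolding rp
    by (simp add: ci inbox contour_integrable_joinI valid_path_join add.assoc)
  have c1: "contour_integral (linepath a1 a2) F = integral {-x0..x0} (\<lambda>s. F (complex_of_real s))"
  proof -
    have "a1 = complex_of_real (-x0)" "a2 = complex_of_real x0"
      by (simp_all add: a1_def a2_def complex_eq_iff)
    thus ?thesis using x0 by (simp add: contour_integral_linepath_Reals_eq)
  qed
  have c4: "contour_integral (linepath a4 a1) F = - contour_integral (linepath a1 a4) F"
    by (rule contour_integral_reverse_linepath) (rule cont[OF inbox(4) inbox(1)])
  have "integral {-x0..x0} (\<lambda>s. F (complex_of_real s))
        = - (contour_integral (linepath a2 a3) F + contour_integral (linepath a3 a4) F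
             - contour_integral (linepath a1 a4) F)"
    using sum c1 c4 by (simp add: algebra_simps eq_neg_iff_add_eq_0)
  hence "norm (integral {-x0..x0} (\<lambda>s. F (complex_of_real s)))
        \<le> norm (contour_integral (linepath a2 a3) F) + norm (contour_integral (linepath a3 a4) F)
           + norm (contour_integral (linepath a1 a4) F)"
    by (metis norm_minus_cancel norm_triangle_ineq4 norm_triangle_ineq order_trans add_right_mono)
  thus ?thesis by (simp add: F_def a1_def a2_def a3_def a4_def)
qed


lemma fb_even: "fb \<beta> t (-s) = fb \<beta> t s"
  by (simp add: fb_def)

lemma sym_integral:
  assumes x0: "0 < x0" "x0 < t"
  shows "integral {-x0..x0} (\<lambda>s. FF \<beta> t l (complex_of_real s))
         = 2 * integral {0..x0} (\<lambda>s. fb \<beta> t s * complex_of_real (cos (l * s)))"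
proof -
  define g where "g = (\<lambda>s. FF \<beta> t l (complex_of_real s))"
  have cg: "continuous_on {-x0..x0} g"
  proof -
    have "continuous_on (SS t) (FF \<beta> t l)" by (rule holomorphic_on_imp_continuous_on[OF FF_holo])
    moreover have "complex_of_real ` {-x0..x0} \<subseteq> SS t" using x0 by (auto simp: SS_def)
    ultimately have "continuous_on {-x0..x0} (FF \<beta> t l \<circ> complex_of_real)"
      by (intro continuous_on_compose continuous_intros) (auto intro: continuous_on_subset)
    thus ?thesis by (simp add: g_def o_def)
  qed
  have ig: "g integrable_on {-x0..x0}" by (rule integrable_continuous_interval[OF cg])
  have ig1: "g integrable_on {-x0..0}" "g integrable_on {0..x0}"
    using ig x0 by (auto intro: integrable_on_subinterval)
  have ig2: "(\<lambda>s. g (-s)) integrable_on {0..x0}"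
    using ig1(1) Henstock_Kurzweil_Integration.integrable_reflect_real[where f=g and a="-x0" and b=0] by simp
  have "integral {-x0..x0} g = integral {-x0..0} g + integral {0..x0} g"
    by (rule Henstock_Kurzweil_Integration.integral_combine[symmetric]) (use ig x0 in auto)
  also have "integral {-x0..0} g = integral {0..x0} (\<lambda>s. g (-s))"
    using Henstock_Kurzweil_Integration.integral_reflect_real[where f="\<lambda>s. g (-s)" and a=0 and b=x0] by simp
  also have "integral {0..x0} (\<lambda>s. g (-s)) + integral {0..x0} g
             = integral {0..x0} (\<lambda>s. g (-s) + g s)"
    using ig1 ig2 by (simp add: integral_add)
  also have "(\<lambda>s. g (-s) + g s) = (\<lambda>s. 2 * (fb \<beta> t s * complex_of_real (cos (l * s))))"
  proof
    fix s
    have "g (-s) + g s = fb \<beta> t s * (exp (\<i> * complex_of_real (l * s)) + exp (- (\<i> * complex_of_real (l * s))))"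
      unfolding g_def using FF_real[of \<beta> t l "-s"] FF_real[of \<beta> t l s]
      by (simp add: fb_even algebra_simps)
    also have "exp (\<i> * complex_of_real (l * s)) + exp (- (\<i> * complex_of_real (l * s)))
               = 2 * cos (complex_of_real (l * s))"
      by (simp add: cos_exp_eq)
    also have "cos (complex_of_real (l * s)) = complex_of_real (cos (l * s))" by (rule cos_of_real)
    finally show "g (-s) + g s = 2 * (fb \<beta> t s * complex_of_real (cos (l * s)))" by simp
  qed
  also have "integral {0..x0} (\<lambda>s. 2 * (fb \<beta> t s * complex_of_real (cos (l * s))))
             = 2 * integral {0..x0} (\<lambda>s. fb \<beta> t s * complex_of_real (cos (l * s)))"
    by (rule integral_mult_right)
  finally show ?thesis by (simp add: g_def)
qed


lemma edge_bound:
  assumes t: "0 < t" "t \<le> 1" and b: "Re \<beta> > -1" and x0: "t/2 \<le> x0" "x0 \<le> t"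
  shows "norm (integral {x0..t} (\<lambda>s. fb \<beta> t s * complex_of_real (cos (l * s))))
         \<le> 2 powr \<bar>Re \<beta>\<bar> * t powr Re \<beta> * ((t - x0) powr (Re \<beta> + 1) / (Re \<beta> + 1))"
proof -
  define b where "b = Re \<beta>"
  have int0: "(\<lambda>s. fb \<beta> t s * complex_of_real (cos (l * s))) integrable_on {0..t}"
    by (rule fb_int(1)[OF t(1) b, of _ 1]) (auto intro!: continuous_intros)
  have int: "(\<lambda>s. fb \<beta> t s * complex_of_real (cos (l * s))) integrable_on {x0..t}"
    by (rule integrable_on_subinterval[OF int0]) (use x0 t in auto)
  have gi: "((\<lambda>s. 2 powr \<bar>b\<bar> * t powr b * (t - s) powr b) has_integral
             2 powr \<bar>b\<bar> * t powr b * ((t - x0) powr (b + 1) / (b + 1))) {x0..t}"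
    by (intro has_integral_mult_right has_integral_powr_rev) (use b x0 in \<open>auto simp: b_def\<close>)
  have pw: "norm (fb \<beta> t s * complex_of_real (cos (l * s))) \<le> 2 powr \<bar>b\<bar> * t powr b * (t - s) powr b"
    if s: "s \<in> {x0..t}" for s
  proof (cases "s = t")
    case True thus ?thesis by (simp add: fb_def)
  next
    case False
    hence st: "s < t" using s by auto
    have s0: "0 \<le> s" "t/2 \<le> s" using s x0 t by auto
    define d where "d = cosh t - cosh s"
    have u: "0 < t * (t - s)" using st t by simp
    have d1: "t * (t - s) / 2 \<le> d" using cosh_diff_lower[of t s] s0 st t by (simp add: d_def)
    have d2: "d \<le> 2 * (t * (t - s))" using cosh_diff_upper[of s t] s0 st t by (simp add: d_def)
    have "norm (fb \<beta> t s * complex_of_real (cos (l * s))) \<le> norm (fb \<beta> t s) * 1"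
      unfolding norm_mult by (intro mult_left_mono) auto
    also have "norm (fb \<beta> t s) = d powr b" using norm_fb[of s t \<beta>] s0 st by (simp add: d_def b_def)
    also have "d powr b \<le> 2 powr \<bar>b\<bar> * (t * (t - s)) powr b"
      by (rule powr_two_sided) (use u d1 d2 in auto)
    also have "(t * (t - s)) powr b = t powr b * (t - s) powr b" by (rule powr_mult)
    finally show ?thesis by (simp add: mult_ac)
  qed
  have "norm (integral {x0..t} (\<lambda>s. fb \<beta> t s * complex_of_real (cos (l * s))))
        \<le> integral {x0..t} (\<lambda>s. 2 powr \<bar>b\<bar> * t powr b * (t - s) powr b)"
    by (rule integral_norm_bound_integral[OF int _ pw]) (use gi in blast)+
  also have "\<dots> = 2 powr \<bar>b\<bar> * t powr b * ((t - x0) powr (b + 1) / (b + 1))"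
    using gi by (rule integral_unique)
  finally show ?thesis by (simp add: b_def)
qed


definition Cosc :: "complex \<Rightarrow> real" where
  "Cosc \<beta> = (2 * exp (\<bar>Im \<beta>\<bar> * pi) * 8 powr \<bar>Re \<beta>\<bar> * Kb (Re \<beta>) * 2 powr \<bar>Re \<beta>\<bar>)
     + (2 * exp (\<bar>Im \<beta>\<bar> * pi) * 8 powr \<bar>Re \<beta>\<bar> * (Re \<beta> + 1) powr (Re \<beta> + 1)) / 2
     + 2 powr \<bar>Re \<beta>\<bar> / (Re \<beta> + 1)"

lemma II_osc_pos:
  assumes t: "0 < t" "t \<le> 1" and b: "Re \<beta> > -1" and l: "0 < l" "1 \<le> l * t"
  shows "norm (II \<beta> t l) \<le> Cosc \<beta> * t powr Re \<beta> * l powr (- (Re \<beta> + 1))"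
proof -
  define b where "b = Re \<beta>"
  define e where "e = 1/(2*l)"
  define x0 where "x0 = t - e"
  define X where "X = t powr b * l powr (- (b + 1))"
  define CV where "CV = 2 * exp (\<bar>Im \<beta>\<bar> * pi) * 8 powr \<bar>b\<bar> * Kb b * 2 powr \<bar>b\<bar>"
  define CT where "CT = 2 * exp (\<bar>Im \<beta>\<bar> * pi) * 8 powr \<bar>b\<bar> * (b + 1) powr (b + 1)"
  have e: "0 < e" "e \<le> t/2" using t l by (auto simp: e_def field_simps)
  have x0: "0 < x0" "x0 < t" "t/2 \<le> x0" using e t by (auto simp: x0_def)
  have int0: "(\<lambda>s. fb \<beta> t s * complex_of_real (cos (l * s))) integrable_on {0..t}"
    by (rule fb_int(1)[OF t(1) b, of _ 1]) (auto intro!: continuous_intros)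
  have split: "II \<beta> t l = integral {0..x0} (\<lambda>s. fb \<beta> t s * complex_of_real (cos (l * s)))
        + integral {x0..t} (\<lambda>s. fb \<beta> t s * complex_of_real (cos (l * s)))"
    unfolding II_def
    by (rule Henstock_Kurzweil_Integration.integral_combine[symmetric]) (use int0 x0 in auto)
  have xa: "\<bar>x0\<bar> = t - 1/(2*l)" "\<bar>-x0\<bar> = t - 1/(2*l)" using x0 by (auto simp: x0_def e_def)
  have V1: "norm (contour_integral (linepath (Complex x0 0) (Complex x0 t)) (FF \<beta> t l)) \<le> CV * X"
    using vert_bound[OF t l b xa(1)] by (simp add: CV_def X_def b_def mult_ac)
  have V2: "norm (contour_integral (linepath (Complex (-x0) 0) (Complex (-x0) t)) (FF \<beta> t l)) \<le> CV * X"
    using vert_bound[OF t l b xa(2)] by (simp add: CV_def X_def b_def mult_ac)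
  have T: "norm (contour_integral (linepath (Complex x0 t) (Complex (-x0) t)) (FF \<beta> t l)) \<le> CT * X"
    using top_bound[OF t l b, of x0] x0 by (simp add: CT_def X_def b_def mult_ac)
  have "2 * norm (integral {0..x0} (\<lambda>s. fb \<beta> t s * complex_of_real (cos (l * s))))
        = norm (integral {-x0..x0} (\<lambda>s. FF \<beta> t l (complex_of_real s)))"
    using sym_integral[OF x0(1,2), of \<beta> l] by (simp add: norm_mult)
  also have "\<dots> \<le> CV * X + CT * X + CV * X"
    using rect_bound[OF t x0(1,2), of \<beta> l] V1 V2 T by linarith
  finally have main: "norm (integral {0..x0} (\<lambda>s. fb \<beta> t s * complex_of_real (cos (l * s))))
        \<le> (CV + CT/2) * X" by (simp add: algebra_simps)
  have edge0: "norm (integral {x0..t} (\<lambda>s. fb \<beta> t s * complex_of_real (cos (l * s))))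
         \<le> 2 powr \<bar>b\<bar> * t powr b * (e powr (b + 1) / (b + 1))"
    using edge_bound[OF t b, of x0 l] x0 by (simp add: b_def x0_def)
  have ep: "e powr (b + 1) \<le> l powr (- (b + 1))"
  proof -
    have "e powr (b + 1) \<le> (1/l) powr (b + 1)"
      using l b by (intro powr_mono2) (auto simp: e_def b_def field_simps)
    also have "(1/l) powr (b + 1) = inverse (l powr (b + 1))" by (simp only: divide_inverse mult_1_left inverse_powr)
    also have "\<dots> = l powr (- (b + 1))" by (simp only: powr_minus)
    finally show ?thesis .
  qed
  have "2 powr \<bar>b\<bar> * t powr b * (e powr (b + 1) / (b + 1))
        \<le> 2 powr \<bar>b\<bar> * t powr b * (l powr (- (b + 1)) / (b + 1))"
    using ep b by (intro mult_left_mono divide_right_mono) (auto simp: b_def)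
  also have "\<dots> = 2 powr \<bar>b\<bar> / (b + 1) * X" by (simp add: X_def)
  finally have edge: "norm (integral {x0..t} (\<lambda>s. fb \<beta> t s * complex_of_real (cos (l * s))))
         \<le> 2 powr \<bar>b\<bar> / (b + 1) * X" using edge0 by linarith
  have "norm (II \<beta> t l) \<le> (CV + CT/2) * X + 2 powr \<bar>b\<bar> / (b + 1) * X"
    unfolding split using main edge norm_triangle_ineq[of "integral {0..x0} (\<lambda>s. fb \<beta> t s * complex_of_real (cos (l * s)))"
        "integral {x0..t} (\<lambda>s. fb \<beta> t s * complex_of_real (cos (l * s)))"] by linarith
  also have "\<dots> = Cosc \<beta> * t powr Re \<beta> * l powr (- (Re \<beta> + 1))"
    by (simp add: Cosc_def CV_def CT_def X_def b_def algebra_simps)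
  finally show ?thesis .
qed

lemma II_even: "II \<beta> t (-l) = II \<beta> t l"
  by (simp add: II_def)

lemma II_osc:
  assumes t: "0 < t" "t \<le> 1" and b: "Re \<beta> > -1" and l: "1 \<le> \<bar>l\<bar> * t"
  shows "norm (II \<beta> t l) \<le> Cosc \<beta> * t powr Re \<beta> * \<bar>l\<bar> powr (- (Re \<beta> + 1))"
proof -
  have "0 < \<bar>l\<bar>" using l by (cases "l = 0") auto
  hence "norm (II \<beta> t \<bar>l\<bar>) \<le> Cosc \<beta> * t powr Re \<beta> * \<bar>l\<bar> powr (- (Re \<beta> + 1))"
    using II_osc_pos[OF t b, of "\<bar>l\<bar>"] l by auto
  moreover have "II \<beta> t \<bar>l\<bar> = II \<beta> t l" by (cases "l \<ge> 0") (auto simp: II_even)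
  ultimately show ?thesis by simp
qed



lemma half_ids:
  fixes t :: real
  shows "exp t - 1 = 2 * exp (t/2) * sinh (t/2)"
    and "sinh t = 2 * sinh (t/2) * cosh (t/2)"
    and "cosh t - 1 = 2 * sinh (t/2) * sinh (t/2)"
proof -
  have e: "exp t = exp (t/2) * exp (t/2)" by (simp add: exp_add[symmetric])
  show "exp t - 1 = 2 * exp (t/2) * sinh (t/2)"
    unfolding sinh_def using e by (simp add: exp_minus field_simps)
  show "sinh t = 2 * sinh (t/2) * cosh (t/2)"
    using sinh_double[of "t/2"] by simp
  show "cosh t - 1 = 2 * sinh (t/2) * sinh (t/2)"
    using cosh_double[of "t/2"] cosh_square_eq[of "t/2"] by (simp add: power2_eq_square)
qed

lemma sinh_pos_real: "0 < x \<Longrightarrow> 0 < sinh (x::real)"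
  using sinh_ge[of x] by simp

lemma Q_formula:
  fixes A nn t :: real
  assumes t: "0 < t"
  shows "exp (A * t) / (exp t - 1) powr (2 * A) * sinh t powr (2 - nn)
       = exp ((-2*A + 2 - nn) * ln 2 + (-2*A + 2 - nn) * ln (sinh (t/2)) + (2 - nn) * ln (cosh (t/2)))"
proof -
  define s c where "s = sinh (t/2)" and "c = cosh (t/2)"
  have s: "0 < s" using sinh_pos_real[of "t/2"] t by (simp add: s_def)
  have c: "0 < c" by (simp add: c_def cosh_real_pos)
  have e1: "exp t - 1 = 2 * exp (t/2) * s" using half_ids(1)[of t] by (simp add: s_def)
  have e2: "sinh t = 2 * s * c" using half_ids(2)[of t] by (simp add: s_def c_def)
  have p1: "0 < exp t - 1" using e1 s by simp
  have p2: "0 < sinh t" using e2 s c by simp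
  have l1: "ln (exp t - 1) = ln 2 + t/2 + ln s" unfolding e1 using s by (simp add: ln_mult)
  have l2: "ln (sinh t) = ln 2 + ln s + ln c" unfolding e2 using s c by (simp add: ln_mult)
  have "exp (A * t) / (exp t - 1) powr (2 * A) * sinh t powr (2 - nn)
        = exp (A * t - 2 * A * ln (exp t - 1) + (2 - nn) * ln (sinh t))"
    using p1 p2 by (simp add: powr_def exp_diff exp_add)
  also have "A * t - 2 * A * ln (exp t - 1) + (2 - nn) * ln (sinh t)
           = (-2*A + 2 - nn) * ln 2 + (-2*A + 2 - nn) * ln s + (2 - nn) * ln c"
    unfolding l1 l2 by (simp add: algebra_simps)
  finally show ?thesis by (simp add: s_def c_def)
qed


lemma t_over_sinh: assumes "0 < (t::real)" shows "t / sinh (t/2) \<le> 2 * (1 + t) * exp (- (t/2))"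
proof -
  have s: "0 < sinh (t/2)" using sinh_pos_real[of "t/2"] assms by simp
  define X where "X = 2 * exp (- (t/2)) * sinh (t/2)"
  have X: "X = 1 - exp (-t)"
    unfolding sinh_def X_def by (simp add: field_simps exp_minus exp_add[symmetric])
  have h: "(1 + t) * exp (-t) \<le> 1"
    using exp_ge_add_one_self[of t] by (simp add: exp_minus field_simps)
  have "(2 * (1 + t) * exp (- (t/2))) * sinh (t/2) = (1 + t) * X" by (simp add: X_def algebra_simps)
  also have "\<dots> = 1 + t - (1 + t) * exp (-t)" by (simp add: X algebra_simps)
  finally have "t \<le> (2 * (1 + t) * exp (- (t/2))) * sinh (t/2)" using h by linarith
  thus ?thesis using s by (simp add: divide_le_eq)
qed

lemma Q_JB_bound:
  fixes A nn t :: real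
  assumes t: "0 < t" and nn: "2 \<le> nn"
  shows "exp (A * t) / (exp t - 1) powr (2 * A) * sinh t powr (2 - nn) * ((cosh t - 1) powr (A + (nn - 3)/2) * t)
         \<le> 2 powr (A + (nn - 3)/2 - 2*A + 2 - nn) * 2 * 2 powr (nn - 2) * ((1 + t) * exp (- ((nn - 1)/2) * t))"
proof -
  define s c where "s = sinh (t/2)" and "c = cosh (t/2)"
  define b where "b = A + (nn - 3)/2"
  define k where "k = A + (nn - 3)/2 - 2*A + 2 - nn"
  have s: "0 < s" using sinh_pos_real[of "t/2"] t by (simp add: s_def)
  have c: "0 < c" by (simp add: c_def cosh_real_pos)
  have cm: "cosh t - 1 = 2 * s * s" using half_ids(3)[of t] by (simp add: s_def)
  have lc: "ln (cosh t - 1) = ln 2 + 2 * ln s" unfolding cm using s by (simp add: ln_mult)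
  have pc: "0 < cosh t - 1" using cm s by simp
  have "exp (A * t) / (exp t - 1) powr (2 * A) * sinh t powr (2 - nn) * ((cosh t - 1) powr b * t)
       = exp ((-2*A + 2 - nn) * ln 2 + (-2*A + 2 - nn) * ln s + (2 - nn) * ln c) * (exp (b * ln (cosh t - 1)) * t)"
    using Q_formula[OF t, of A nn] pc by (simp add: powr_def s_def c_def)
  also have "\<dots> = exp (k * ln 2 + (2 - nn) * ln c) * (t * exp (- ln s))"
  proof -
    have "(-2*A + 2 - nn) * ln 2 + (-2*A + 2 - nn) * ln s + (2 - nn) * ln c + b * ln (cosh t - 1)
          = k * ln 2 + (2 - nn) * ln c + (- ln s)"
      unfolding lc by (simp add: b_def k_def algebra_simps add_divide_distrib diff_divide_distrib)
    thus ?thesis by (simp add: exp_add[symmetric] mult_ac)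
  qed
  also have "\<dots> = 2 powr k * c powr (2 - nn) * (t / s)"
    using s c by (simp add: powr_def exp_add exp_minus divide_inverse mult_ac)
  also have "\<dots> \<le> 2 powr k * (2 powr (nn - 2) * exp ((2 - nn) * (t/2))) * (2 * (1 + t) * exp (- (t/2)))"
  proof (rule mult_mono)
    show "t / s \<le> 2 * (1 + t) * exp (- (t/2))" using t_over_sinh[OF t] by (simp add: s_def)
    have ce: "exp (t/2) / 2 \<le> c" unfolding c_def cosh_def by (simp add: field_simps)
    have "c powr (2 - nn) \<le> (exp (t/2) / 2) powr (2 - nn)"
      using ce nn by (intro powr_mono2') auto
    also have "(exp (t/2) / 2) powr (2 - nn) = exp ((2 - nn) * (t/2 - ln 2))"
      by (simp add: powr_def ln_div)
    also have "\<dots> = 2 powr (nn - 2) * exp ((2 - nn) * (t/2))"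
      by (simp add: powr_def exp_add[symmetric] algebra_simps)
    finally show "2 powr k * c powr (2 - nn) \<le> 2 powr k * (2 powr (nn - 2) * exp ((2 - nn) * (t/2)))"
      by (intro mult_left_mono) auto
  qed (use t s in auto)
  also have "\<dots> = 2 powr k * 2 * 2 powr (nn - 2) * ((1 + t) * (exp ((2 - nn) * (t/2)) * exp (- (t/2))))"
    by (simp add: mult_ac)
  also have "exp ((2 - nn) * (t/2)) * exp (- (t/2)) = exp (- ((nn - 1)/2) * t)"
    by (simp add: exp_add[symmetric] field_simps)
  finally show ?thesis by (simp add: b_def k_def)
qed

lemma Q_small_bound:
  fixes A nn t :: real
  assumes t: "0 < t" "t \<le> 1" and nn: "2 \<le> nn"
  shows "exp (A * t) / (exp t - 1) powr (2 * A) * sinh t powr (2 - nn)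
         \<le> 2 powr (-2*A + 2 - nn) * 2 powr \<bar>-2*A + 2 - nn\<bar> * t powr (-2*A + 2 - nn)"
proof -
  define s c where "s = sinh (t/2)" and "c = cosh (t/2)"
  define e where "e = -2*A + 2 - nn"
  have s: "0 < s" using sinh_pos_real[of "t/2"] t by (simp add: s_def)
  have c: "1 \<le> c" by (simp add: c_def cosh_real_ge_1)
  have sb: "t/2 \<le> s" "s \<le> t" using sinh_ge[of "t/2"] sinh_le2[of "t/2"] t by (auto simp: s_def)
  have "exp (A * t) / (exp t - 1) powr (2 * A) * sinh t powr (2 - nn)
        = 2 powr e * s powr e * c powr (2 - nn)"
    using Q_formula[OF t(1), of A nn] s c
    by (simp add: powr_def exp_add e_def s_def c_def)
  also have "\<dots> \<le> 2 powr e * (2 powr \<bar>e\<bar> * t powr e) * 1"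
  proof (intro mult_mono)
    show "s powr e \<le> 2 powr \<bar>e\<bar> * t powr e"
      by (rule powr_two_sided) (use sb t in auto)
    have "c powr (2 - nn) \<le> 1 powr (2 - nn)" using c nn by (intro powr_mono2') auto
    thus "c powr (2 - nn) \<le> 1" by simp
  qed auto
  finally show ?thesis by (simp add: e_def mult_ac)
qed


definition cfac :: "nat \<Rightarrow> complex \<Rightarrow> real \<Rightarrow> complex" where
  "cfac n \<alpha> t = 2 powr ((of_nat n - 2) / 2 + \<alpha>) * Gamma (of_nat n / 2)
     * exp (\<alpha> * of_real t) / (complex_of_real (exp t - 1)) powr (2 * \<alpha>)
     * (complex_of_real (sinh t)) powr ((2 - of_nat n) / 2 + \<alpha>)
     * (complex_of_real (sqrt (2 / pi)) / Gamma (1/2 - ((2 - of_nat n) / 2 - \<alpha>))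
        * (complex_of_real (sinh t)) powr ((2 - of_nat n) / 2 - \<alpha>))"

lemma mult_m_eq: "mult_m n \<alpha> t lam = cfac n \<alpha> t * II (- ((2 - of_nat n) / 2 - \<alpha>) - 1/2) t lam"
  unfolding mult_m_def legendreP_cosh_def cfac_def II_def fb_def by (simp only: mult.assoc)

definition K0 :: "nat \<Rightarrow> complex \<Rightarrow> real" where
  "K0 n \<alpha> = 2 powr ((real n - 2) / 2 + Re \<alpha>) * norm (Gamma (of_nat n / 2 :: complex)) * sqrt (2 / pi)
     / norm (Gamma (1/2 - ((2 - of_nat n) / 2 - \<alpha>)))"

lemma K0_nonneg: "K0 n \<alpha> \<ge> 0"
  by (simp add: K0_def)

lemma norm_cfac:
  assumes t: "0 < t"
  shows "norm (cfac n \<alpha> t) = K0 n \<alpha> * (exp (Re \<alpha> * t) / (exp t - 1) powr (2 * Re \<alpha>) * sinh t powr (2 - real n))"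
proof -
  have e: "0 \<le> exp t - 1" using t by simp
  have s: "0 \<le> sinh t" using sinh_pos_real[OF t] by simp
  have n1: "norm (2 powr ((of_nat n - 2) / 2 + \<alpha>) :: complex) = 2 powr ((real n - 2) / 2 + Re \<alpha>)"
    by (subst norm_powr_real_powr) auto
  have n2: "norm (exp (\<alpha> * of_real t)) = exp (Re \<alpha> * t)" by (simp add: norm_exp_eq_Re)
  have n3: "norm ((complex_of_real (exp t - 1)) powr (2 * \<alpha>)) = (exp t - 1) powr (2 * Re \<alpha>)"
    using e by (subst norm_powr_real_powr) auto
  have n4: "norm ((complex_of_real (sinh t)) powr ((2 - of_nat n) / 2 + \<alpha>)) = sinh t powr ((2 - real n) / 2 + Re \<alpha>)"
    using s by (subst norm_powr_real_powr) auto
  have n5: "norm ((complex_of_real (sinh t)) powr ((2 - of_nat n) / 2 - \<alpha>)) = sinh t powr ((2 - real n) / 2 - Re \<alpha>)"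
    using s by (subst norm_powr_real_powr) auto
  have n6: "norm (complex_of_real (sqrt (2 / pi))) = sqrt (2 / pi)" by simp
  have sp: "sinh t powr ((2 - real n) / 2 + Re \<alpha>) * sinh t powr ((2 - real n) / 2 - Re \<alpha>) = sinh t powr (2 - real n)"
    by (simp add: powr_add[symmetric])
  show ?thesis
    unfolding cfac_def norm_mult norm_divide n1 n2 n3 n4 n5 n6 K0_def
    using sp by (simp add: field_simps)
qed

lemma Re_beta: "Re (- ((2 - of_nat n) / 2 - \<alpha>) - 1/2) = Re \<alpha> + (real n - 3) / 2"
  by (simp add: field_simps)

lemma Cosc_nonneg: "Re \<beta> > -1 \<Longrightarrow> Cosc \<beta> \<ge> 0"
  unfolding Cosc_def using Kb(1)[of "Re \<beta>"] by (intro add_nonneg_nonneg) auto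


theorem lemma2p1:
  fixes n :: nat and \<alpha> :: complex
  assumes "n \<ge> 2" and "Re \<alpha> > (1 - real n) / 2"
  shows "\<exists>C>0.
     (\<forall>lam t. t > 0 \<longrightarrow> norm (mult_m n \<alpha> t lam) \<le> C * (1 + t) * exp (- ((real n - 1) / 2) * t))
   \<and> (\<forall>lam t. 0 < t \<and> t \<le> 1 \<longrightarrow>
         (\<lambda>l. mult_m n \<alpha> t l) differentiable (at lam)
       \<and> norm (vector_derivative (\<lambda>l. mult_m n \<alpha> t l) (at lam)) \<le> C * t)
   \<and> (\<forall>lam t. 0 < t \<and> t \<le> 1 \<and> \<bar>lam\<bar> * t \<ge> 1 \<longrightarrow>
         norm (mult_m n \<alpha> t lam) \<le> C * (\<bar>lam\<bar> * t) powr (- (Re \<alpha> + (real n - 1) / 2)))"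
proof -
  define \<beta> where "\<beta> = - ((2 - of_nat n) / 2 - \<alpha>) - 1/2"
  define A where "A = Re \<alpha>"
  define nn where "nn = real n"
  define b where "b = Re \<beta>"
  have bA: "b = A + (nn - 3)/2" using Re_beta[of n \<alpha>] by (simp add: b_def \<beta>_def A_def nn_def)
  have nn2: "2 \<le> nn" using assms(1) by (simp add: nn_def)
  have b1: "Re \<beta> > -1" using assms(2) bA by (simp add: b_def A_def nn_def field_simps)
  define Q where "Q t = exp (A * t) / (exp t - 1) powr (2 * A) * sinh t powr (2 - nn)" for t
  have Q0: "Q t \<ge> 0" for t by (simp add: Q_def)
  have mm: "mult_m n \<alpha> t l = cfac n \<alpha> t * II \<beta> t l" for t l
    by (simp add: mult_m_eq \<beta>_def)
  have nc: "norm (cfac n \<alpha> t) = K0 n \<alpha> * Q t" if "0 < t" for t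
    using norm_cfac[OF that, of n \<alpha>] by (simp add: Q_def A_def nn_def)
  have nm: "norm (mult_m n \<alpha> t l) = K0 n \<alpha> * Q t * norm (II \<beta> t l)" if "0 < t" for t l
    using nc[OF that] by (simp add: mm norm_mult)
  define C1 where "C1 = K0 n \<alpha> * (2 powr (A + (nn - 3)/2 - 2*A + 2 - nn) * 2 * 2 powr (nn - 2)) / (min b 0 + 1)"
  have mb: "min b 0 + 1 > 0" using b1 by (simp add: b_def)
  have C1: "C1 \<ge> 0" using K0_nonneg mb by (simp add: C1_def)
  have QJB: "K0 n \<alpha> * Q t * JB \<beta> t \<le> C1 * ((1 + t) * exp (- ((nn - 1)/2) * t))" if t: "0 < t" for t
  proof -
    have "K0 n \<alpha> * Q t * JB \<beta> t = K0 n \<alpha> * (Q t * ((cosh t - 1) powr (A + (nn - 3)/2) * t)) / (min b 0 + 1)"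
      by (simp add: JB_def bA[symmetric] b_def)
    also have "\<dots> \<le> K0 n \<alpha> * (2 powr (A + (nn - 3)/2 - 2*A + 2 - nn) * 2 * 2 powr (nn - 2)
                     * ((1 + t) * exp (- ((nn - 1)/2) * t))) / (min b 0 + 1)"
      using Q_JB_bound[OF t nn2, of A] mb K0_nonneg[of n \<alpha>]
      by (intro divide_right_mono mult_left_mono) (auto simp: Q_def)
    also have "\<dots> = C1 * ((1 + t) * exp (- ((nn - 1)/2) * t))" by (simp add: C1_def)
    finally show ?thesis .
  qed
  define e where "e = -2*A + 2 - nn"
  define C3 where "C3 = K0 n \<alpha> * (2 powr e * 2 powr \<bar>e\<bar>) * Cosc \<beta>"
  have C3: "C3 \<ge> 0" using K0_nonneg Cosc_nonneg[OF b1] by (simp add: C3_def)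
  define C where "C = 2 * C1 + C3 + 1"
  have Cpos: "C > 0" using C1 C3 by (simp add: C_def)
  show ?thesis
  proof (intro exI[of _ C] conjI allI impI Cpos)
    fix lam t :: real assume t: "t > 0"
    have "norm (mult_m n \<alpha> t lam) \<le> K0 n \<alpha> * Q t * JB \<beta> t"
      unfolding nm[OF t] using II_bound[OF t b1] K0_nonneg Q0 by (intro mult_left_mono) auto
    also have "\<dots> \<le> C1 * ((1 + t) * exp (- ((nn - 1)/2) * t))" by (rule QJB[OF t])
    also have "\<dots> \<le> C * ((1 + t) * exp (- ((nn - 1)/2) * t))"
      using C1 C3 t by (intro mult_right_mono) (auto simp: C_def)
    finally show "norm (mult_m n \<alpha> t lam) \<le> C * (1 + t) * exp (- ((real n - 1) / 2) * t)"
      by (simp add: nn_def mult_ac)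
  next
    fix lam t :: real assume tt: "0 < t \<and> t \<le> 1"
    hence t: "0 < t" "t \<le> 1" by auto
    have fe: "(\<lambda>l. mult_m n \<alpha> t l) = (\<lambda>l. cfac n \<alpha> t * II \<beta> t l)" by (simp add: mm)
    have hd: "((\<lambda>l. mult_m n \<alpha> t l) has_vector_derivative cfac n \<alpha> t * DD \<beta> t lam) (at lam)"
      unfolding fe by (intro has_vector_derivative_mult_right II_deriv t b1)
    show "(\<lambda>l. mult_m n \<alpha> t l) differentiable (at lam)" by (rule differentiableI_vector[OF hd])
    have "norm (vector_derivative (\<lambda>l. mult_m n \<alpha> t l) (at lam)) = K0 n \<alpha> * Q t * norm (DD \<beta> t lam)"
      using vector_derivative_at[OF hd] nc[OF t(1)] by (simp add: norm_mult)
    also have "\<dots> \<le> K0 n \<alpha> * Q t * (t * JB \<beta> t)"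
      using DD_bound[OF t(1) b1] K0_nonneg Q0 by (intro mult_left_mono) auto
    also have "\<dots> = t * (K0 n \<alpha> * Q t * JB \<beta> t)" by (simp add: mult_ac)
    also have "\<dots> \<le> t * (C1 * ((1 + t) * exp (- ((nn - 1)/2) * t)))"
      using QJB[OF t(1)] t by (intro mult_left_mono) auto
    also have "\<dots> \<le> t * (C1 * 2)"
    proof -
      have "exp (- ((nn - 1)/2) * t) \<le> 1" using nn2 t by simp
      hence "(1 + t) * exp (- ((nn - 1)/2) * t) \<le> 2 * 1" using t by (intro mult_mono) auto
      thus ?thesis using C1 t by (intro mult_left_mono) auto
    qed
    also have "\<dots> \<le> C * t" using C1 C3 t by (simp add: C_def)
    finally show "norm (vector_derivative (\<lambda>l. mult_m n \<alpha> t l) (at lam)) \<le> C * t" .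
  next
    fix lam t :: real assume tt: "0 < t \<and> t \<le> 1 \<and> 1 \<le> \<bar>lam\<bar> * t"
    hence t: "0 < t" "t \<le> 1" and l: "1 \<le> \<bar>lam\<bar> * t" by auto
    have lp: "0 < \<bar>lam\<bar>" using l by (cases "lam = 0") auto
    have Qb: "Q t \<le> 2 powr e * 2 powr \<bar>e\<bar> * t powr e"
      using Q_small_bound[OF t nn2, of A] by (simp add: Q_def e_def)
    have "norm (mult_m n \<alpha> t lam) = K0 n \<alpha> * Q t * norm (II \<beta> t lam)" by (rule nm[OF t(1)])
    also have "\<dots> \<le> K0 n \<alpha> * (2 powr e * 2 powr \<bar>e\<bar> * t powr e)
                    * (Cosc \<beta> * t powr Re \<beta> * \<bar>lam\<bar> powr (- (Re \<beta> + 1)))"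
      using II_osc[OF t b1 l] Qb K0_nonneg Q0[of t]
      by (intro mult_mono) (auto intro: mult_left_mono)
    also have "\<dots> = C3 * (t powr e * t powr b) * \<bar>lam\<bar> powr (- (b + 1))"
      by (simp add: C3_def b_def mult_ac)
    also have "t powr e * t powr b = t powr (- (b + 1))"
    proof -
      have "e + b = - (b + 1)" by (simp add: e_def bA field_simps)
      hence "t powr (e + b) = t powr (- (b + 1))" by (rule arg_cong)
      thus ?thesis by (simp add: powr_add)
    qed
    also have "C3 * t powr (- (b + 1)) * \<bar>lam\<bar> powr (- (b + 1)) = C3 * (\<bar>lam\<bar> * t) powr (- (b + 1))"
      by (simp add: powr_mult mult_ac)
    also have "\<dots> \<le> C * (\<bar>lam\<bar> * t) powr (- (b + 1))"
      using C1 by (intro mult_right_mono) (auto simp: C_def)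
    also have "b + 1 = Re \<alpha> + (real n - 1) / 2" by (simp add: bA A_def nn_def field_simps)
    finally show "norm (mult_m n \<alpha> t lam) \<le> C * (\<bar>lam\<bar> * t) powr (- (Re \<alpha> + (real n - 1) / 2))" .
  qed
qed


end
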